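(* Let $(X,T),(Y,S)$ be transitive shifts of finite type and $f\in C(X\times Y)$ locally constant. Let $\nu_0,\nu_1\in\mathcal{M}_S(Y)$ be such that $\nu_0$ is $\alpha$-maximizing and $\operatorname{supp}(\nu_1)\subseteq\operatorname{supp}(\nu_0)$. Then $\nu_1$ is $\alpha$-maximizing.
   Context: For a finite alphabet $\mathcal{A}$, $\mathcal{A}^{\mathbb{Z}}$ carries the product of discrete topologies and the left shift $(Tx)(j)=x(j+1)$. A shift is a nonempty compact $X\subseteq\mathcal{A}^{\mathbb{Z}}$ with $TX=X$; a shift of finite type is $X=\{x:(T^jx)|_{[0,M]}\notin\mathcal{F}\ \forall j\}$ for some $M\in\mathbb{N}$, $\mathcal{F}\subseteq\mathcal{A}^{\{0,\dots,M\}}$. Transitive: there is $D\in\mathbb{N}$ such that for all $x_1,x_2\in X$, integers $b_1,a_2$ with $a_2-b_1\ge D$, some $x'\in X$ has $x'(j)=x_1(j)$ for $j\le b_1$ and $x'(j)=x_2(j)$ for $j\ge a_2$. A function $g$ on a shift (here on $X\times Y$, viewed as a shift over $\mathcal{A}\times\mathcal{A}$) is locally constant if there is $L\in\mathbb{N}$ such that $g$ depends only on coordinates in $[-L,L]$. $\psi_f(\nu)=\min\{\int f\,d\lambda:\lambda\in\mathcal{M}_{T\times S}(X\times Y),(\pi_Y)_*\lambda=\nu\}$, $\pi_Y(x,y)=y$, $\alpha(f)=\sup_\nu\psi_f(\nu)$; $\nu$ is $\alpha$-maximizing if $\psi_f(\nu)=\alpha(f)$. *)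

theory Defs
  imports "HOL-Probability.Probability"
begin

text \<open>Full shift space A^Z with the Borel sigma-algebra of the product of discrete
  topologies, i.e. the product sigma-algebra generated by the coordinate maps.\<close>
definition seq_space :: "(int \<Rightarrow> 'a) measure" where
  "seq_space = (\<Pi>\<^sub>M j\<in>(UNIV::int set). count_space (UNIV::'a set))"

definition shift :: "(int \<Rightarrow> 'a) \<Rightarrow> (int \<Rightarrow> 'a)" where
  "shift x = (\<lambda>j. x (j + 1))"

definition is_sft :: "(int \<Rightarrow> 'a) set \<Rightarrow> bool" where
  "is_sft X \<longleftrightarrow> X \<noteq> {} \<and>
     (\<exists>(M::nat) (F::'a list set). (\<forall>w\<in>F. length w = M + 1) \<and>
        X = {x. \<forall>j::int. map (\<lambda>i. x (j + int i)) [0..<M+1] \<notin> F})"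

definition transitive_shift :: "(int \<Rightarrow> 'a) set \<Rightarrow> bool" where
  "transitive_shift X \<longleftrightarrow> (\<exists>D::nat. \<forall>x1\<in>X. \<forall>x2\<in>X. \<forall>b1 a2::int. a2 - b1 \<ge> int D \<longrightarrow>
     (\<exists>x'\<in>X. (\<forall>j\<le>b1. x' j = x1 j) \<and> (\<forall>j\<ge>a2. x' j = x2 j)))"

definition locally_constant_on ::
  "((int \<Rightarrow> 'a) \<times> (int \<Rightarrow> 'a) \<Rightarrow> real) \<Rightarrow> (int \<Rightarrow> 'a) set \<Rightarrow> (int \<Rightarrow> 'a) set \<Rightarrow> bool" where
  "locally_constant_on f X Y \<longleftrightarrow> (\<exists>L::nat. \<forall>x y x' y'.
     x \<in> X \<longrightarrow> y \<in> Y \<longrightarrow> x' \<in> X \<longrightarrow> y' \<in> Y \<longrightarrow>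
     (\<forall>j\<in>{- int L..int L}. x j = x' j \<and> y j = y' j) \<longrightarrow> f (x, y) = f (x', y'))"

definition invariant_measures :: "('b \<Rightarrow> 'b) \<Rightarrow> 'b measure \<Rightarrow> 'b set \<Rightarrow> 'b measure set" where
  "invariant_measures \<tau> \<Omega> Z = {\<mu>. sets \<mu> = sets \<Omega> \<and> prob_space \<mu> \<and> emeasure \<mu> Z = 1 \<and>
     (\<forall>A\<in>sets \<Omega>. emeasure \<mu> (\<tau> -` A \<inter> space \<Omega>) = emeasure \<mu> A)}"

definition MS :: "(int \<Rightarrow> 'a) set \<Rightarrow> (int \<Rightarrow> 'a) measure set" where
  "MS Y = invariant_measures shift seq_space Y"

definition MTS :: "(int \<Rightarrow> 'a) set \<Rightarrow> (int \<Rightarrow> 'a) set \<Rightarrow> ((int \<Rightarrow> 'a) \<times> (int \<Rightarrow> 'a)) measure set" where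
  "MTS X Y = invariant_measures (\<lambda>(x, y). (shift x, shift y)) (seq_space \<Otimes>\<^sub>M seq_space) (X \<times> Y)"

definition couplings ::
  "(int \<Rightarrow> 'a) set \<Rightarrow> (int \<Rightarrow> 'a) set \<Rightarrow> (int \<Rightarrow> 'a) measure \<Rightarrow> ((int \<Rightarrow> 'a) \<times> (int \<Rightarrow> 'a)) measure set" where
  "couplings X Y \<nu> = {\<mu> \<in> MTS X Y. distr \<mu> seq_space snd = \<nu>}"

text \<open>psi_f(nu): the minimum (written as infimum; it is attained) of the integral of f
  over joinings with marginal nu; f is integrated over X x Y, where the joinings live.\<close>
definition psi ::
  "((int \<Rightarrow> 'a) \<times> (int \<Rightarrow> 'a) \<Rightarrow> real) \<Rightarrow> (int \<Rightarrow> 'a) set \<Rightarrow> (int \<Rightarrow> 'a) set \<Rightarrow> (int \<Rightarrow> 'a) measure \<Rightarrow> real" where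
  "psi f X Y \<nu> = Inf ((\<lambda>\<mu>. set_lebesgue_integral \<mu> (X \<times> Y) f) ` couplings X Y \<nu>)"

definition alpha ::
  "((int \<Rightarrow> 'a) \<times> (int \<Rightarrow> 'a) \<Rightarrow> real) \<Rightarrow> (int \<Rightarrow> 'a) set \<Rightarrow> (int \<Rightarrow> 'a) set \<Rightarrow> real" where
  "alpha f X Y = Sup (psi f X Y ` MS Y)"

definition alpha_maximizing ::
  "((int \<Rightarrow> 'a) \<times> (int \<Rightarrow> 'a) \<Rightarrow> real) \<Rightarrow> (int \<Rightarrow> 'a) set \<Rightarrow> (int \<Rightarrow> 'a) set \<Rightarrow> (int \<Rightarrow> 'a) measure \<Rightarrow> bool" where
  "alpha_maximizing f X Y \<nu> \<longleftrightarrow> psi f X Y \<nu> = alpha f X Y"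

text \<open>Topological support: points all of whose (basic cylinder) neighbourhoods have positive measure.\<close>
definition measure_support :: "(int \<Rightarrow> 'a) measure \<Rightarrow> (int \<Rightarrow> 'a) set" where
  "measure_support \<nu> = {y. \<forall>n::nat. emeasure \<nu> {z. \<forall>j\<in>{- int n..int n}. z j = y j} > 0}"

end

theory Submission
  imports Defs
begin

definition sh :: "int \<Rightarrow> (int \<Rightarrow> 'a) \<Rightarrow> (int \<Rightarrow> 'a)" where
  "sh i x = (\<lambda>j. x (j + i))"

lemma sh_apply[simp]: "sh i x j = x (j + i)" by (simp add: sh_def)
lemma sh_sh[simp]: "sh i (sh k x) = sh (i + k) x" by (simp add: sh_def algebra_simps)
lemma sh_0[simp]: "sh 0 x = x" by (simp add: sh_def)
lemma shift_sh: "shift = sh 1" by (simp add: fun_eq_iff shift_def sh_def)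
lemma funpow_shift: "(shift ^^ k) = sh (int k)"
  by (induction k) (auto simp: shift_sh fun_eq_iff add.commute add.left_commute)

lemma space_seq_space[simp]: "space seq_space = UNIV"
  by (simp add: seq_space_def space_PiM PiE_UNIV_domain)

lemma sets_seq_space_cyl:
  assumes "finite J"
  shows "{y. \<forall>j\<in>J. y j = w j} \<in> sets seq_space"
proof -
  have "{y. \<forall>j\<in>J. y j = w j} = space seq_space \<inter> (\<Inter>j\<in>J. (\<lambda>y. y j) -` {w j} \<inter> space seq_space)"
    by auto
  also have "\<dots> \<in> sets seq_space"
  proof (cases "J = {}")
    case True then show ?thesis using sets.top[of seq_space] by simp
  next
    case False
    have "\<And>j. (\<lambda>y. y j) -` {w j} \<inter> space seq_space \<in> sets seq_space"
      unfolding seq_space_def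
      by (rule measurable_sets[OF measurable_component_singleton]) auto
    then show ?thesis using assms False by (intro sets.Int sets.top sets.finite_INT) auto
  qed
  finally show ?thesis .
qed

lemma restrict_measurable_cs:
  assumes "finite J"
  shows "(\<lambda>y::int\<Rightarrow>'a::finite. restrict y J) \<in> measurable seq_space (count_space (Pi\<^sub>E J (\<lambda>_. UNIV)))"
proof (subst measurable_count_space_eq2, intro finite_PiE assms, simp, intro conjI ballI)
  show "(\<lambda>y. restrict y J) \<in> space seq_space \<rightarrow> Pi\<^sub>E J (\<lambda>_. UNIV)" by auto
  fix w assume w: "w \<in> Pi\<^sub>E J (\<lambda>_. UNIV::'a set)"
  have "(\<lambda>y. restrict y J) -` {w} \<inter> space seq_space = {y. \<forall>j\<in>J. y j = w j}"
    using w by (auto simp: restrict_def fun_eq_iff PiE_def extensional_def)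
  then show "(\<lambda>y. restrict y J) -` {w} \<inter> space seq_space \<in> sets seq_space"
    using sets_seq_space_cyl[OF assms] by simp
qed

definition fdet :: "int set \<Rightarrow> ((int \<Rightarrow> 'a) \<Rightarrow> 'b) \<Rightarrow> bool" where
  "fdet J h \<longleftrightarrow> (\<forall>y y'. (\<forall>j\<in>J. y j = y' j) \<longrightarrow> h y = h y')"

lemma fdet_measurable:
  fixes h :: "(int \<Rightarrow> 'a::finite) \<Rightarrow> 'b"
  assumes "finite J" "fdet J h" "\<And>y. h y \<in> space N"
  shows "h \<in> measurable seq_space N"
proof -
  have "h = h \<circ> (\<lambda>y. restrict y J)"
    using assms(2) by (auto simp: fdet_def fun_eq_iff)
  moreover have "h \<in> measurable (count_space (Pi\<^sub>E J (\<lambda>_. UNIV))) N" using assms(3) by auto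
  ultimately show ?thesis using measurable_comp[OF restrict_measurable_cs[OF assms(1)]] by metis
qed

lemma fdet_set:
  assumes "finite J" "fdet J (\<lambda>y::int\<Rightarrow>'a::finite. y \<in> S)"
  shows "S \<in> sets seq_space"
proof -
  have "(\<lambda>y. y \<in> S) \<in> measurable seq_space (count_space UNIV)"
    by (rule fdet_measurable[OF assms]) auto
  then have "(\<lambda>y. y \<in> S) -` {True} \<inter> space seq_space \<in> sets seq_space"
    by (rule measurable_sets) auto
  then show ?thesis by (simp add: vimage_def)
qed

lemma sets_pair_cyl:
  assumes "finite J"
  shows "{y. \<forall>j\<in>J. y j = w j} \<times> {y. \<forall>j\<in>J. y j = w' j} \<in> sets (seq_space \<Otimes>\<^sub>M seq_space)"
  using sets_seq_space_cyl[OF assms, of w] sets_seq_space_cyl[OF assms, of w'] by (intro pair_measureI)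

definition fdet2 :: "int set \<Rightarrow> ((int \<Rightarrow> 'a) \<times> (int \<Rightarrow> 'a) \<Rightarrow> 'b) \<Rightarrow> bool" where
  "fdet2 J h \<longleftrightarrow> (\<forall>x y x' y'. (\<forall>j\<in>J. x j = x' j \<and> y j = y' j) \<longrightarrow> h (x, y) = h (x', y'))"

lemma fdet2_measurable:
  fixes h :: "(int \<Rightarrow> 'a::finite) \<times> (int \<Rightarrow> 'a) \<Rightarrow> 'b"
  assumes J: "finite J" and "fdet2 J h" "\<And>y. h y \<in> space N"
  shows "h \<in> measurable (seq_space \<Otimes>\<^sub>M seq_space) N"
proof -
  let ?P = "Pi\<^sub>E J (\<lambda>_. UNIV::'a set)"
  have r: "(\<lambda>(x,y). (restrict x J, restrict y J)) \<in> measurable (seq_space \<Otimes>\<^sub>M seq_space) (count_space (?P \<times> ?P))"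
  proof (subst measurable_count_space_eq2, intro finite_cartesian_product finite_PiE J, simp, simp, intro conjI ballI)
    show "(\<lambda>(x,y). (restrict x J, restrict y J)) \<in> space (seq_space \<Otimes>\<^sub>M seq_space) \<rightarrow> ?P \<times> ?P" by auto
    fix w assume w: "w \<in> ?P \<times> ?P"
    obtain w1 w2 where ww: "w = (w1, w2)" by force
    have "(\<lambda>(x,y). (restrict x J, restrict y J)) -` {w} \<inter> space (seq_space \<Otimes>\<^sub>M seq_space)
        = {y. \<forall>j\<in>J. y j = w1 j} \<times> {y. \<forall>j\<in>J. y j = w2 j}"
      using w unfolding ww by (auto simp: restrict_def fun_eq_iff PiE_def extensional_def space_pair_measure)
    then show "(\<lambda>(x,y). (restrict x J, restrict y J)) -` {w} \<inter> space (seq_space \<Otimes>\<^sub>M seq_space) \<in> sets (seq_space \<Otimes>\<^sub>M seq_space)"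
      using sets_pair_cyl[OF J] by simp
  qed
  have "h = h \<circ> (\<lambda>(x,y). (restrict x J, restrict y J))"
    using assms(2) by (auto simp: fdet2_def fun_eq_iff)
  moreover have "h \<in> measurable (count_space (?P \<times> ?P)) N" using assms(3) by auto
  ultimately show ?thesis using measurable_comp[OF r] by metis
qed

lemma space_pair_seq[simp]: "space (seq_space \<Otimes>\<^sub>M seq_space) = UNIV"
  by (simp add: space_pair_measure)

lemma sh_measurable[measurable]: "sh i \<in> measurable seq_space seq_space"
proof -
  have "(\<lambda>x. sh i x) \<in> measurable seq_space seq_space"
    unfolding seq_space_def
    by (rule measurable_PiM_single') (auto simp: sh_def)
  then show ?thesis by simp
qed

lemma fdet_image_finite:
  fixes h :: "(int \<Rightarrow> 'a::finite) \<Rightarrow> 'b"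
  assumes "finite J" "fdet J h"
  shows "finite (h ` S)"
proof -
  have "h ` S \<subseteq> h ` Pi\<^sub>E J (\<lambda>_. UNIV)"
  proof
    fix b assume "b \<in> h ` S"
    then obtain y where "b = h y" by auto
    moreover have "h y = h (restrict y J)" using assms(2) by (auto simp: fdet_def)
    ultimately show "b \<in> h ` Pi\<^sub>E J (\<lambda>_. UNIV)" by auto
  qed
  moreover have "finite (h ` Pi\<^sub>E J (\<lambda>_. UNIV::'a set))" using assms(1) by (intro finite_imageI finite_PiE) auto
  ultimately show ?thesis by (rule finite_subset)
qed


lemma sft_props:
  fixes Z :: "(int \<Rightarrow> 'a::finite) set"
  assumes "is_sft Z"
  shows "Z \<noteq> {}" "\<And>x i. x \<in> Z \<Longrightarrow> sh i x \<in> Z" "Z \<in> sets seq_space"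
    "\<exists>M::nat. \<forall>x. (\<forall>j. \<exists>z\<in>Z. \<forall>i\<in>{j..j+int M}. x i = z i) \<longrightarrow> x \<in> Z"
proof -
  obtain M :: nat and F :: "'a list set" where F: "\<forall>w\<in>F. length w = M + 1"
    and Zeq: "Z = {x. \<forall>j::int. map (\<lambda>i. x (j + int i)) [0..<M+1] \<notin> F}"
    using assms unfolding is_sft_def by blast
  show "Z \<noteq> {}" using assms unfolding is_sft_def by blast
  show "\<And>x i. x \<in> Z \<Longrightarrow> sh i x \<in> Z"
  proof -
    fix x i assume "x \<in> Z"
    then have "\<forall>j::int. map (\<lambda>t. x (j + int t)) [0..<M+1] \<notin> F" using Zeq by auto
    then have "map (\<lambda>t. x ((j + i) + int t)) [0..<M+1] \<notin> F" for j by blast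
    then show "sh i x \<in> Z" unfolding Zeq by (auto simp: algebra_simps)
  qed
  have "Z = (\<Inter>j\<in>UNIV. {x. map (\<lambda>i. x (j + int i)) [0..<M+1] \<notin> F})" using Zeq by auto
  also have "\<dots> \<in> sets seq_space"
  proof -
    have H: "{x::int\<Rightarrow>'a. map (\<lambda>i. x (j + int i)) [0..<M+1] \<notin> F} \<in> sets seq_space" for j
    proof -
      have fd: "fdet {j..j + int M} (\<lambda>y::int\<Rightarrow>'a. y \<in> {x. map (\<lambda>i. x (j + int i)) [0..<M + 1] \<notin> F})"
        unfolding fdet_def
      proof (intro allI impI)
        fix y y' :: "int \<Rightarrow> 'a" assume "\<forall>t\<in>{j..j + int M}. y t = y' t"
        then have "map (\<lambda>i. y (j + int i)) [0..<M + 1] = map (\<lambda>i. y' (j + int i)) [0..<M + 1]"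
          by (intro map_cong) auto
        then show "(y \<in> {x. map (\<lambda>i. x (j + int i)) [0..<M + 1] \<notin> F}) =
           (y' \<in> {x. map (\<lambda>i. x (j + int i)) [0..<M + 1] \<notin> F})" by (simp only: mem_Collect_eq)
      qed
      show ?thesis by (rule fdet_set[OF _ fd]) simp
    qed
    show ?thesis using H by (intro sets.countable_INT) auto
  qed
  finally show "Z \<in> sets seq_space" .
  show "\<exists>M::nat. \<forall>x. (\<forall>j. \<exists>z\<in>Z. \<forall>i\<in>{j..j+int M}. x i = z i) \<longrightarrow> x \<in> Z"
  proof (intro exI allI impI)
    fix x assume H: "\<forall>j. \<exists>z\<in>Z. \<forall>i\<in>{j..j+int M}. x i = z i"
    show "x \<in> Z" unfolding Zeq
    proof (intro CollectI allI)
      fix j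
      obtain z where z: "z \<in> Z" "\<forall>i\<in>{j..j+int M}. x i = z i" using H by blast
      have "map (\<lambda>i. x (j + int i)) [0..<M + 1] = map (\<lambda>i. z (j + int i)) [0..<M + 1]"
        using z(2) by (intro map_cong) auto
      moreover have "map (\<lambda>i. z (j + int i)) [0..<M + 1] \<notin> F" using z(1) Zeq by blast
      ultimately show "map (\<lambda>i. x (j + int i)) [0..<M + 1] \<notin> F" by metis
    qed
  qed
qed

locale SS =
  fixes X Y :: "(int \<Rightarrow> 'a::finite) set" and f :: "(int \<Rightarrow> 'a) \<times> (int \<Rightarrow> 'a) \<Rightarrow> real"
    and MX MY DX DY L :: nat
  assumes Xne: "X \<noteq> {}" and Yne: "Y \<noteq> {}"
    and Xsets: "X \<in> sets seq_space" and Ysets: "Y \<in> sets seq_space"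
    and Xsh: "\<And>x i. x \<in> X \<Longrightarrow> sh i x \<in> X" and Ysh: "\<And>x i. x \<in> Y \<Longrightarrow> sh i x \<in> Y"
    and Xloc: "\<And>x. (\<And>j. \<exists>z\<in>X. \<forall>i\<in>{j..j+int MX}. x i = z i) \<Longrightarrow> x \<in> X"
    and Yloc: "\<And>x. (\<And>j. \<exists>z\<in>Y. \<forall>i\<in>{j..j+int MY}. x i = z i) \<Longrightarrow> x \<in> Y"
    and Xtr: "\<And>x1 x2 b1 a2. x1 \<in> X \<Longrightarrow> x2 \<in> X \<Longrightarrow> a2 - b1 \<ge> int DX \<Longrightarrow>
        \<exists>x'\<in>X. (\<forall>j\<le>b1. x' j = x1 j) \<and> (\<forall>j\<ge>a2. x' j = x2 j)"
    and Ytr: "\<And>x1 x2 b1 a2. x1 \<in> Y \<Longrightarrow> x2 \<in> Y \<Longrightarrow> a2 - b1 \<ge> int DY \<Longrightarrow>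
        \<exists>x'\<in>Y. (\<forall>j\<le>b1. x' j = x1 j) \<and> (\<forall>j\<ge>a2. x' j = x2 j)"
    and LMX: "MX \<le> L" and LMY: "MY \<le> L"
    and lc: "\<And>x y x' y'. x \<in> X \<Longrightarrow> y \<in> Y \<Longrightarrow> x' \<in> X \<Longrightarrow> y' \<in> Y \<Longrightarrow>
        (\<forall>j\<in>{- int L..int L}. x j = x' j \<and> y j = y' j) \<Longrightarrow> f (x, y) = f (x', y')"
begin

definition agreeL :: "(int \<Rightarrow> 'a) \<times> (int \<Rightarrow> 'a) \<Rightarrow> (int \<Rightarrow> 'a) \<times> (int \<Rightarrow> 'a) \<Rightarrow> bool" where
  "agreeL z p \<longleftrightarrow> (\<forall>j\<in>{- int L..int L}. fst z j = fst p j \<and> snd z j = snd p j)"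

definition ft :: "(int \<Rightarrow> 'a) \<times> (int \<Rightarrow> 'a) \<Rightarrow> real" where
  "ft z = (if \<exists>p. fst p \<in> X \<and> snd p \<in> Y \<and> agreeL z p then f (SOME p. fst p \<in> X \<and> snd p \<in> Y \<and> agreeL z p) else 0)"

lemma ft_eq: assumes "x \<in> X" "y \<in> Y" shows "ft (x, y) = f (x, y)"
proof -
  have ex: "\<exists>p. fst p \<in> X \<and> snd p \<in> Y \<and> agreeL (x,y) p" using assms by (intro exI[of _ "(x,y)"]) (auto simp: agreeL_def)
  define p where "p = (SOME p. fst p \<in> X \<and> snd p \<in> Y \<and> agreeL (x,y) p)"
  have p: "fst p \<in> X \<and> snd p \<in> Y \<and> agreeL (x,y) p" unfolding p_def by (rule someI_ex[OF ex])
  have "f p = f (x, y)" using p assms lc[of x y "fst p" "snd p"] by (cases p) (auto simp: agreeL_def)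
  then show ?thesis using ex unfolding ft_def p_def by simp
qed

lemma ft_fdet2: "fdet2 {- int L..int L} ft"
  unfolding fdet2_def
proof (intro allI impI)
  fix x y x' y' :: "int \<Rightarrow> 'a" assume H: "\<forall>j\<in>{- int L..int L}. x j = x' j \<and> y j = y' j"
  have "agreeL (x, y) p = agreeL (x', y') p" for p using H by (auto simp: agreeL_def)
  then have e: "agreeL (x, y) = agreeL (x', y')" by (simp add: fun_eq_iff)
  show "ft (x, y) = ft (x', y')" by (simp only: ft_def e)
qed

lemma ft_agree:
  assumes "\<And>j. - int L \<le> j \<Longrightarrow> j \<le> int L \<Longrightarrow> x j = x' j"
    "\<And>j. - int L \<le> j \<Longrightarrow> j \<le> int L \<Longrightarrow> y j = y' j"
  shows "ft (x, y) = ft (x', y')"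
  using ft_fdet2 assms unfolding fdet2_def by auto

lemma ft_measurable[measurable]: "ft \<in> borel_measurable (seq_space \<Otimes>\<^sub>M seq_space)"
  by (rule fdet2_measurable[OF _ ft_fdet2]) auto

lemma ft_bounded_ex: "\<exists>c\<ge>0. \<forall>z. \<bar>ft z\<bar> \<le> c"
proof -
  let ?P = "Pi\<^sub>E {- int L..int L} (\<lambda>_. UNIV::'a set)"
  have fin: "finite (ft ` (?P \<times> ?P))" by (intro finite_imageI finite_cartesian_product finite_PiE) auto
  have sub: "ft z \<in> ft ` (?P \<times> ?P)" for z
  proof -
    obtain x y where z: "z = (x, y)" by force
    have "ft (x, y) = ft (restrict x {- int L..int L}, restrict y {- int L..int L})"
      by (rule ft_agree) auto
    then show ?thesis unfolding z by auto
  qed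
  define c where "c = (\<Sum>v\<in>ft ` (?P \<times> ?P). \<bar>v\<bar>)"
  have "\<bar>ft z\<bar> \<le> c" for z unfolding c_def
    using member_le_sum[OF sub[of z], of abs] fin by auto
  moreover have "c \<ge> 0" unfolding c_def by (auto intro: sum_nonneg)
  ultimately show ?thesis by blast
qed

definition cf :: real where "cf = (SOME c. c \<ge> 0 \<and> (\<forall>z. \<bar>ft z\<bar> \<le> c))"

lemma cf_both: "cf \<ge> 0 \<and> (\<forall>z. \<bar>ft z\<bar> \<le> cf)"
  unfolding cf_def by (rule someI_ex) (use ft_bounded_ex in blast)

lemma cf: "cf \<ge> 0" "\<bar>ft z\<bar> \<le> cf"
  using cf_both by blast+

definition Sf :: "nat \<Rightarrow> (int \<Rightarrow> 'a) \<Rightarrow> (int \<Rightarrow> 'a) \<Rightarrow> real" where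
  "Sf n x y = (\<Sum>k<n. ft (sh (int k) x, sh (int k) y))"

lemma Sf_0[simp]: "Sf 0 x y = 0" by (simp add: Sf_def)

lemma Sf_add: "Sf (a + b) x y = Sf a x y + Sf b (sh (int a) x) (sh (int a) y)"
proof (induction b)
  case 0 then show ?case by simp
next
  case (Suc b)
  have E1: "Sf (a + Suc b) x y = Sf (a + b) x y + ft (sh (int (a+b)) x, sh (int (a+b)) y)"
    by (simp add: Sf_def)
  have E2: "Sf (Suc b) (sh (int a) x) (sh (int a) y) = Sf b (sh (int a) x) (sh (int a) y) + ft (sh (int (a+b)) x, sh (int (a+b)) y)"
    by (simp add: Sf_def add.commute)
  show ?case using E1 E2 Suc.IH by linarith
qed

lemma Sf_bound: "\<bar>Sf n x y\<bar> \<le> n * cf"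
proof -
  have "\<bar>Sf n x y\<bar> \<le> (\<Sum>k<n. \<bar>ft (sh (int k) x, sh (int k) y)\<bar>)" unfolding Sf_def by (rule sum_abs)
  also have "\<dots> \<le> (\<Sum>k<n. cf)" by (intro sum_mono cf)
  finally show ?thesis by simp
qed

lemma Sf_fdet_x: "fdet {- int L..int n + int L} (\<lambda>x. Sf n x y)"
  unfolding fdet_def Sf_def
proof (intro allI impI sum.cong refl)
  fix x x' :: "int \<Rightarrow> 'a" and k assume H: "\<forall>j\<in>{- int L..int n + int L}. x j = x' j" and k: "k \<in> {..<n}"
  show "ft (sh (int k) x, sh (int k) y) = ft (sh (int k) x', sh (int k) y)"
    by (rule ft_agree) (use H k in auto)
qed

lemma Sf_fdet_y: "fdet {- int L..int n + int L} (\<lambda>y. Sf n x y)"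
  unfolding fdet_def Sf_def
proof (intro allI impI sum.cong refl)
  fix y y' :: "int \<Rightarrow> 'a" and k assume H: "\<forall>j\<in>{- int L..int n + int L}. y j = y' j" and k: "k \<in> {..<n}"
  show "ft (sh (int k) x, sh (int k) y) = ft (sh (int k) x, sh (int k) y')"
    by (rule ft_agree) (use H k in auto)
qed

definition g :: "nat \<Rightarrow> (int \<Rightarrow> 'a) \<Rightarrow> real" where
  "g n y = Min ((\<lambda>x. Sf n x y) ` X)"

lemma g_fin: "finite ((\<lambda>x. Sf n x y) ` X)"
  by (rule fdet_image_finite[OF _ Sf_fdet_x]) auto

lemma g_le: "x \<in> X \<Longrightarrow> g n y \<le> Sf n x y"
  unfolding g_def using g_fin by (intro Min_le) auto

lemma g_attained: "\<exists>x\<in>X. Sf n x y = g n y"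
proof -
  have "g n y \<in> (\<lambda>x. Sf n x y) ` X" unfolding g_def using g_fin Xne by (intro Min_in) auto
  then show ?thesis by auto
qed

lemma g_0[simp]: "g 0 y = 0"
  using g_attained[of 0 y] by auto

lemma g_bound: "\<bar>g n y\<bar> \<le> n * cf"
  using g_attained[of n y] Sf_bound by metis

lemma g_fdet: "fdet {- int L..int n + int L} (g n)"
  unfolding fdet_def g_def
proof (intro allI impI)
  fix y y' :: "int \<Rightarrow> 'a" assume H: "\<forall>j\<in>{- int L..int n + int L}. y j = y' j"
  have "Sf n x y = Sf n x y'" for x using Sf_fdet_y[of n x] H unfolding fdet_def by blast
  then show "Min ((\<lambda>x. Sf n x y) ` X) = Min ((\<lambda>x. Sf n x y') ` X)" by simp
qed

lemma g_measurable[measurable]: "g n \<in> borel_measurable seq_space"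
  by (rule fdet_measurable[OF _ g_fdet]) auto

lemma g_superadd: "g (a + b) y \<ge> g a y + g b (sh (int a) y)"
proof -
  obtain x where x: "x \<in> X" "Sf (a + b) x y = g (a + b) y" using g_attained by blast
  have "g a y \<le> Sf a x y" using g_le x by blast
  moreover have "g b (sh (int a) y) \<le> Sf b (sh (int a) x) (sh (int a) y)" using g_le Xsh x by blast
  ultimately show ?thesis using x Sf_add by simp
qed

definition CC :: real where "CC = 2 * cf * (2 * L + DX)"

lemma CC_nonneg: "CC \<ge> 0" using cf unfolding CC_def by simp

lemma g_almost: "g (a + b) y \<le> g a y + g b (sh (int a) y) + CC"
proof -
  obtain x1 where x1: "x1 \<in> X" "Sf a x1 y = g a y" using g_attained by blast
  obtain x2 where x2: "x2 \<in> X" "Sf b x2 (sh (int a) y) = g b (sh (int a) y)" using g_attained by blast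
  define b1 where "b1 = int a + int L - 1"
  have "\<exists>x'\<in>X. (\<forall>j\<le>b1. x' j = x1 j) \<and> (\<forall>j\<ge>b1 + int DX. x' j = sh (- int a) x2 j)"
    by (rule Xtr[OF x1(1) Xsh[OF x2(1)]]) simp
  then obtain x' where x': "x' \<in> X" "\<forall>j\<le>b1. x' j = x1 j" "\<forall>j\<ge>b1 + int DX. x' j = sh (- int a) x2 j"
    by blast
  have e1: "Sf a x' y = Sf a x1 y" unfolding Sf_def
  proof (intro sum.cong refl)
    fix k assume k: "k \<in> {..<a}"
    show "ft (sh (int k) x', sh (int k) y) = ft (sh (int k) x1, sh (int k) y)"
      by (rule ft_agree) (use x'(2) k b1_def in auto)
  qed
  let ?K = "2 * L + DX"
  have e2: "ft (sh (int k) (sh (int a) x'), sh (int k) (sh (int a) y))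
      \<le> ft (sh (int k) x2, sh (int k) (sh (int a) y)) + (if k < ?K then 2 * cf else 0)" for k
  proof (cases "k < ?K")
    case True
    then show ?thesis using cf(2)[of "(sh (int k) (sh (int a) x'), sh (int k) (sh (int a) y))"]
        cf(2)[of "(sh (int k) x2, sh (int k) (sh (int a) y))"] by auto
  next
    case False
    have "ft (sh (int k) (sh (int a) x'), sh (int k) (sh (int a) y)) = ft (sh (int k) x2, sh (int k) (sh (int a) y))"
      by (rule ft_agree) (use x'(3) False b1_def in auto)
    then show ?thesis using False by simp
  qed
  have "Sf b (sh (int a) x') (sh (int a) y) \<le> (\<Sum>k<b. ft (sh (int k) x2, sh (int k) (sh (int a) y)) + (if k < ?K then 2 * cf else 0))"
    unfolding Sf_def by (intro sum_mono e2)
  also have "\<dots> = Sf b x2 (sh (int a) y) + (\<Sum>k<b. (if k < ?K then 2 * cf else 0))"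
    by (simp add: Sf_def sum.distrib)
  finally have S1: "Sf b (sh (int a) x') (sh (int a) y) \<le> Sf b x2 (sh (int a) y) + (\<Sum>k<b. (if k < ?K then 2 * cf else 0))" .
  have S2: "(\<Sum>k<b. (if k < ?K then 2 * cf else 0)) \<le> CC"
  proof -
    have "(\<Sum>k<b'. (if k < K' then 2 * cf else 0)) = 2 * cf * min b' K'" for b' K' :: nat
      by (induction b') (auto simp: min_def algebra_simps)
    moreover have "2 * cf * min b ?K \<le> 2 * cf * ?K" using cf(1) by (intro mult_left_mono) auto
    ultimately show ?thesis unfolding CC_def by simp
  qed
  from S1 S2 have "Sf b (sh (int a) x') (sh (int a) y) \<le> Sf b x2 (sh (int a) y) + CC" by linarith
  moreover have "g (a + b) y \<le> Sf (a + b) x' y" using g_le x' by blast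
  ultimately show ?thesis using Sf_add[of a b x' y] e1 x1 x2 by simp
qed

end

lemma funpow_measurable: "F \<in> measurable M M \<Longrightarrow> (F ^^ k) \<in> measurable M M"
  by (induction k) (auto intro: measurable_comp)

definition avg :: "'b measure \<Rightarrow> ('b \<Rightarrow> 'b) \<Rightarrow> nat \<Rightarrow> 'b measure \<Rightarrow> 'b measure" where
  "avg \<Omega> F p \<nu> = measure_pmf (pmf_of_set {..<p}) \<bind> (\<lambda>k. distr \<nu> \<Omega> (F ^^ k))"

locale avg_setting =
  fixes \<Omega> :: "'b measure" and F :: "'b \<Rightarrow> 'b" and p :: nat and \<nu> :: "'b measure"
  assumes F: "F \<in> measurable \<Omega> \<Omega>" and \<nu>: "prob_space \<nu>" and s\<nu>: "sets \<nu> = sets \<Omega>" and p: "p > 0"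
begin

lemma Fk: "(F ^^ k) \<in> measurable \<Omega> \<Omega>" by (rule funpow_measurable[OF F])

lemma Fk\<nu>: "(F ^^ k) \<in> measurable \<nu> \<Omega>"
  using Fk measurable_cong_sets[OF s\<nu> refl] by blast

lemma sp\<nu>: "space \<nu> = space \<Omega>" using sets_eq_imp_space_eq[OF s\<nu>] .

lemma distr_prob: "prob_space (distr \<nu> \<Omega> (F ^^ k))"
  by (rule prob_space.prob_space_distr[OF \<nu> Fk\<nu>])

lemma distr_le1: "emeasure (distr \<nu> \<Omega> (F ^^ k)) (space \<Omega>) \<le> 1"
  using prob_space.emeasure_space_1[OF distr_prob[of k]] by simp

lemma kernel: "(\<lambda>k. distr \<nu> \<Omega> (F ^^ k)) \<in> measurable (measure_pmf (pmf_of_set {..<p})) (subprob_algebra \<Omega>)"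
proof -
  have "distr \<nu> \<Omega> (F ^^ k) \<in> space (subprob_algebra \<Omega>)" for k
    using prob_space.prob_space_distr[OF \<nu> Fk\<nu>[of k]]
    by (auto simp: space_subprob_algebra intro: prob_space_imp_subprob_space)
  then show ?thesis by simp
qed

lemma sets_avg[simp]: "sets (avg \<Omega> F p \<nu>) = sets \<Omega>"
  unfolding avg_def by (rule sets_bind) auto

lemma space_avg[simp]: "space (avg \<Omega> F p \<nu>) = space \<Omega>"
  using sets_eq_imp_space_eq[OF sets_avg] .

lemma prob_avg: "prob_space (avg \<Omega> F p \<nu>)"
  unfolding avg_def
  by (rule prob_space.prob_space_bind[OF prob_space_measure_pmf _ kernel])
     (auto intro!: AE_I2 prob_space.prob_space_distr[OF \<nu> Fk\<nu>])

lemma integral_avg: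
  fixes h :: "'b \<Rightarrow> real"
  assumes h: "h \<in> borel_measurable \<Omega>" and hB: "\<And>x. x \<in> space \<Omega> \<Longrightarrow> \<bar>h x\<bar> \<le> B"
  shows "integral\<^sup>L (avg \<Omega> F p \<nu>) h = (\<Sum>k<p. \<integral>x. h ((F ^^ k) x) \<partial>\<nu>) / p"
proof -
  have "integral\<^sup>L (avg \<Omega> F p \<nu>) h = \<integral>k. integral\<^sup>L (distr \<nu> \<Omega> (F ^^ k)) h \<partial>measure_pmf (pmf_of_set {..<p})"
    unfolding avg_def
    by (rule integral_bind[OF h hB kernel, where B'=1])
       (auto intro!: AE_I2 distr_le1 simp: measure_pmf.finite_measure_axioms)
  also have "\<dots> = (\<Sum>k<p. integral\<^sup>L (distr \<nu> \<Omega> (F ^^ k)) h) / p"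
    using p by (subst integral_pmf_of_set) auto
  also have "\<dots> = (\<Sum>k<p. \<integral>x. h ((F ^^ k) x) \<partial>\<nu>) / p"
    by (simp add: integral_distr[OF Fk\<nu> h])
  finally show ?thesis .
qed

lemma measure_avg:
  assumes A: "A \<in> sets \<Omega>"
  shows "measure (avg \<Omega> F p \<nu>) A = (\<Sum>k<p. measure \<nu> ((F ^^ k) -` A \<inter> space \<Omega>)) / p"
proof -
  have "measure (avg \<Omega> F p \<nu>) A = integral\<^sup>L (avg \<Omega> F p \<nu>) (indicator A)"
    using A sets.sets_into_space[OF A] by (simp add: Int_absorb2)
  also have "\<dots> = (\<Sum>k<p. \<integral>x. indicator A ((F ^^ k) x) \<partial>\<nu>) / p"
    by (rule integral_avg[where B=1]) (use A in auto)
  also have "(\<lambda>k. \<integral>x. indicator A ((F ^^ k) x) \<partial>\<nu>) = (\<lambda>k. measure \<nu> ((F ^^ k) -` A \<inter> space \<Omega>))"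
  proof
    fix k
    have "(\<lambda>x. indicator A ((F ^^ k) x) :: real) = indicator ((F ^^ k) -` A)"
      by (auto simp: indicator_def)
    then show "(\<integral>x. indicator A ((F ^^ k) x) \<partial>\<nu>) = measure \<nu> ((F ^^ k) -` A \<inter> space \<Omega>)"
      by (simp add: sp\<nu>)
  qed
  finally show ?thesis .
qed

lemma avg_invariant:
  assumes per: "\<And>A. A \<in> sets \<Omega> \<Longrightarrow> measure \<nu> ((F ^^ p) -` A \<inter> space \<Omega>) = measure \<nu> A"
  assumes A: "A \<in> sets \<Omega>"
  shows "emeasure (avg \<Omega> F p \<nu>) (F -` A \<inter> space \<Omega>) = emeasure (avg \<Omega> F p \<nu>) A"
proof -
  interpret P: prob_space "avg \<Omega> F p \<nu>" by (rule prob_avg)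
  have A': "F -` A \<inter> space \<Omega> \<in> sets \<Omega>" using measurable_sets[OF F A] .
  have sp: "(F ^^ k) x \<in> space \<Omega>" if "x \<in> space \<Omega>" for k x
    using measurable_space[OF Fk that] .
  have pre: "(F ^^ k) -` (F -` A \<inter> space \<Omega>) \<inter> space \<Omega> = (F ^^ Suc k) -` A \<inter> space \<Omega>" for k
    using sp by auto
  define a where "a k = measure \<nu> ((F ^^ k) -` A \<inter> space \<Omega>)" for k
  have a0: "a 0 = measure \<nu> A"
    unfolding a_def using sets.sets_into_space[OF A] by (simp add: Int_absorb2)
  have "measure (avg \<Omega> F p \<nu>) (F -` A \<inter> space \<Omega>) = (\<Sum>k<p. a (Suc k)) / p"
    unfolding measure_avg[OF A'] pre a_def ..
  also have "(\<Sum>k<p. a (Suc k)) = (\<Sum>k<p. a k)"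
  proof -
    obtain q where q: "p = Suc q" using p by (cases p) auto
    have e1: "(\<Sum>k<Suc p. a k) = a 0 + (\<Sum>k<p. a (Suc k))" by (rule sum.lessThan_Suc_shift)
    have e2: "(\<Sum>k<Suc p. a k) = (\<Sum>k<p. a k) + a p" by (rule sum.lessThan_Suc)
    have "a p = a 0" using per[OF A] a0 unfolding a_def by simp
    then show ?thesis using e1 e2 by linarith
  qed
  also have "(\<Sum>k<p. a k) / p = measure (avg \<Omega> F p \<nu>) A"
    unfolding measure_avg[OF A] a_def ..
  finally show ?thesis using A A' by (simp add: P.emeasure_eq_measure)
qed

end

lemma inv_iter:
  assumes \<tau>: "\<tau> \<in> measurable \<Omega> \<Omega>" and s: "sets \<mu> = sets \<Omega>"
    and inv: "\<And>A. A \<in> sets \<Omega> \<Longrightarrow> emeasure \<mu> (\<tau> -` A \<inter> space \<Omega>) = emeasure \<mu> A"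
  shows "A \<in> sets \<Omega> \<Longrightarrow> emeasure \<mu> ((\<tau> ^^ k) -` A \<inter> space \<Omega>) = emeasure \<mu> A"
proof (induction k arbitrary: A)
  case 0 then show ?case using sets.sets_into_space[OF 0] by (simp add: Int_absorb2)
next
  case (Suc k)
  have eq: "(\<tau> ^^ Suc k) -` A \<inter> space \<Omega> = (\<tau> ^^ k) -` (\<tau> -` A \<inter> space \<Omega>) \<inter> space \<Omega>"
    using measurable_space[OF funpow_measurable[OF \<tau>, of k]] by auto
  show ?case using Suc.IH[OF measurable_sets[OF \<tau> Suc.prems]] inv[OF Suc.prems] eq by (simp only:)
qed

lemma inv_distr:
  assumes \<tau>: "\<tau> \<in> measurable \<Omega> \<Omega>" and s: "sets \<mu> = sets \<Omega>"
    and inv: "\<And>A. A \<in> sets \<Omega> \<Longrightarrow> emeasure \<mu> (\<tau> -` A \<inter> space \<Omega>) = emeasure \<mu> A"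
  shows "distr \<mu> \<Omega> (\<tau> ^^ k) = \<mu>"
proof (rule measure_eqI)
  show "sets (distr \<mu> \<Omega> (\<tau> ^^ k)) = sets \<mu>" using s by simp
  fix A assume "A \<in> sets (distr \<mu> \<Omega> (\<tau> ^^ k))"
  then have A: "A \<in> sets \<Omega>" by simp
  have m: "(\<tau> ^^ k) \<in> measurable \<mu> \<Omega>"
    using funpow_measurable[OF \<tau>] measurable_cong_sets[OF s refl] by blast
  show "emeasure (distr \<mu> \<Omega> (\<tau> ^^ k)) A = emeasure \<mu> A"
    using inv_iter[OF assms A, of k] sets_eq_imp_space_eq[OF s] by (simp add: emeasure_distr[OF m A])
qed

lemma inv_integral:
  fixes h :: "'b \<Rightarrow> real"
  assumes \<tau>: "\<tau> \<in> measurable \<Omega> \<Omega>" and s: "sets \<mu> = sets \<Omega>"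
    and inv: "\<And>A. A \<in> sets \<Omega> \<Longrightarrow> emeasure \<mu> (\<tau> -` A \<inter> space \<Omega>) = emeasure \<mu> A"
    and h: "h \<in> borel_measurable \<Omega>"
  shows "(\<integral>x. h ((\<tau> ^^ k) x) \<partial>\<mu>) = integral\<^sup>L \<mu> h"
proof -
  have m: "(\<tau> ^^ k) \<in> measurable \<mu> \<Omega>"
    using funpow_measurable[OF \<tau>] measurable_cong_sets[OF s refl] by blast
  have "integral\<^sup>L \<mu> h = integral\<^sup>L (distr \<mu> \<Omega> (\<tau> ^^ k)) h" using inv_distr[OF assms(1-3)] by simp
  also have "\<dots> = (\<integral>x. h ((\<tau> ^^ k) x) \<partial>\<mu>)" by (rule integral_distr[OF m h])
  finally show ?thesis by simp
qed


lemma bnd_int: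
  fixes h :: "'b \<Rightarrow> real"
  assumes "prob_space M" "h \<in> borel_measurable M" "\<And>x. \<bar>h x\<bar> \<le> B"
  shows "integrable M h"
proof -
  interpret prob_space M by fact
  show ?thesis by (rule integrable_const_bound[where B=B]) (use assms in auto)
qed

lemma AE_of_em1:
  assumes "prob_space M" "emeasure M A = 1"
  shows "AE x in M. x \<in> A"
proof -
  interpret prob_space M by fact
  have "measure M A = 1" using assms(2) by (simp add: measure_def)
  then show ?thesis by (rule AE_prob_1)
qed

lemma shift_measurable[measurable]: "shift \<in> measurable seq_space seq_space"
  unfolding shift_sh by (rule sh_measurable)

context SS begin

definition FF :: "(int \<Rightarrow> 'a) \<times> (int \<Rightarrow> 'a) \<Rightarrow> (int \<Rightarrow> 'a) \<times> (int \<Rightarrow> 'a)" where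
  "FF = (\<lambda>(x, y). (shift x, shift y))"

lemma FF_measurable: "FF \<in> measurable (seq_space \<Otimes>\<^sub>M seq_space) (seq_space \<Otimes>\<^sub>M seq_space)"
  unfolding FF_def by measurable

lemma FF_pow: "(FF ^^ k) = (\<lambda>(x, y). (sh (int k) x, sh (int k) y))"
  by (induction k) (auto simp: FF_def shift_sh fun_eq_iff add.commute add.left_commute)

lemma FF_pow_apply: "(FF ^^ k) (x, y) = (sh (int k) x, sh (int k) y)"
  by (simp add: FF_pow)

lemma XY_sets: "X \<times> Y \<in> sets (seq_space \<Otimes>\<^sub>M seq_space)"
  using Xsets Ysets by (rule pair_measureI)

lemma MS_D:
  assumes "\<nu> \<in> MS Y"
  shows "prob_space \<nu>" "sets \<nu> = sets seq_space" "emeasure \<nu> Y = 1"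
    "\<And>A. A \<in> sets seq_space \<Longrightarrow> emeasure \<nu> (shift -` A \<inter> space seq_space) = emeasure \<nu> A"
  using assms unfolding MS_def invariant_measures_def by auto

lemma MS_sh_measure:
  assumes "\<nu> \<in> MS Y" "A \<in> sets seq_space"
  shows "measure \<nu> (sh (int k) -` A) = measure \<nu> A"
  using inv_iter[OF shift_measurable MS_D(2,4)[OF assms(1)] assms(2), of k]
  by (simp add: funpow_shift measure_def)

lemma MS_sh_integral:
  fixes h :: "_ \<Rightarrow> real"
  assumes "\<nu> \<in> MS Y" "h \<in> borel_measurable seq_space"
  shows "(\<integral>y. h (sh (int k) y) \<partial>\<nu>) = integral\<^sup>L \<nu> h"
  using inv_integral[OF shift_measurable MS_D(2,4)[OF assms(1)] assms(2), of k]
  by (simp add: funpow_shift)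

lemma MTS_D:
  assumes "lam \<in> MTS X Y"
  shows "prob_space lam" "sets lam = sets (seq_space \<Otimes>\<^sub>M seq_space)" "emeasure lam (X \<times> Y) = 1"
    "\<And>A. A \<in> sets (seq_space \<Otimes>\<^sub>M seq_space) \<Longrightarrow> emeasure lam (FF -` A \<inter> space (seq_space \<Otimes>\<^sub>M seq_space)) = emeasure lam A"
  using assms unfolding MTS_def invariant_measures_def FF_def by auto

lemma MTS_int_ft:
  assumes "lam \<in> MTS X Y"
  shows "set_lebesgue_integral lam (X \<times> Y) f = integral\<^sup>L lam ft"
proof -
  have e: "(\<lambda>z. indicator (X \<times> Y) z *\<^sub>R f z) = (\<lambda>z. indicator (X \<times> Y) z *\<^sub>R ft z)"
    by (auto simp: fun_eq_iff indicator_def ft_eq)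
  have AE: "AE z in lam. z \<in> X \<times> Y" using AE_of_em1[OF MTS_D(1,3)[OF assms]] .
  have m: "ft \<in> borel_measurable lam" using measurable_cong_sets[OF MTS_D(2)[OF assms] refl] ft_measurable by blast
  have mXY: "X \<times> Y \<in> sets lam" using MTS_D(2)[OF assms] XY_sets by simp
  show ?thesis unfolding set_lebesgue_integral_def e
    by (rule integral_cong_AE) (use m mXY AE in \<open>auto simp: indicator_def\<close>)
qed

lemma ft_int: "prob_space M \<Longrightarrow> sets M = sets (seq_space \<Otimes>\<^sub>M seq_space) \<Longrightarrow> integrable M ft"
proof -
  assume a: "prob_space M" "sets M = sets (seq_space \<Otimes>\<^sub>M seq_space)"
  have "ft \<in> borel_measurable M" using measurable_cong_sets[OF a(2) refl] ft_measurable by blast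
  then show ?thesis by (rule bnd_int[OF a(1) _ cf(2)])
qed

lemma E_bound:
  assumes lam: "lam \<in> couplings X Y \<nu>" and n: "n > 0"
  shows "integral\<^sup>L \<nu> (g n) \<le> n * integral\<^sup>L lam ft"
proof -
  have M: "lam \<in> MTS X Y" and marg: "distr lam seq_space snd = \<nu>" using lam unfolding couplings_def by auto
  note P = MTS_D(1)[OF M] and S = MTS_D(2)[OF M]
  have mft: "ft \<in> borel_measurable lam" using measurable_cong_sets[OF S refl] ft_measurable by blast
  have mFF: "(FF ^^ k) \<in> measurable lam (seq_space \<Otimes>\<^sub>M seq_space)" for k
    using measurable_cong_sets[OF S refl] funpow_measurable[OF FF_measurable] by blast
  have mk: "(\<lambda>z. ft ((FF ^^ k) z)) \<in> borel_measurable lam" for k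
    using measurable_comp[OF mFF ft_measurable] by (simp add: comp_def)
  have ik: "integrable lam (\<lambda>z. ft ((FF ^^ k) z))" for k
    by (rule bnd_int[OF P mk, where B=cf]) (rule cf)
  have inv: "(\<integral>z. ft ((FF ^^ k) z) \<partial>lam) = integral\<^sup>L lam ft" for k
    by (rule inv_integral[OF FF_measurable S MTS_D(4)[OF M] ft_measurable])
  have Sfe: "(\<Sum>k<n. ft ((FF ^^ k) z)) = Sf n (fst z) (snd z)" for z
    by (cases z) (simp add: Sf_def FF_pow_apply)
  have "n * integral\<^sup>L lam ft = (\<Sum>k<n. \<integral>z. ft ((FF ^^ k) z) \<partial>lam)" by (simp add: inv)
  also have "\<dots> = (\<integral>z. (\<Sum>k<n. ft ((FF ^^ k) z)) \<partial>lam)" using Bochner_Integration.integral_sum[where I="{..<n}" and M=lam and f="\<lambda>k z. ft ((FF ^^ k) z)"] ik by simp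
  also have "\<dots> = (\<integral>z. Sf n (fst z) (snd z) \<partial>lam)" by (simp add: Sfe)
  finally have e1: "n * integral\<^sup>L lam ft = (\<integral>z. Sf n (fst z) (snd z) \<partial>lam)" .
  have msnd: "snd \<in> measurable lam seq_space"
    using measurable_cong_sets[OF S refl] measurable_snd by blast
  have mg: "(\<lambda>z. g n (snd z)) \<in> borel_measurable lam"
    using measurable_comp[OF msnd g_measurable] by (simp add: comp_def)
  have iS: "integrable lam (\<lambda>z. Sf n (fst z) (snd z))"
  proof -
    have "integrable lam (\<lambda>z. (\<Sum>k<n. ft ((FF ^^ k) z)))" using ik by auto
    then show ?thesis by (simp add: Sfe)
  qed
  have ig: "integrable lam (\<lambda>z. g n (snd z))" by (rule bnd_int[OF P mg, where B="n * cf"]) (rule g_bound)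
  have AE: "AE z in lam. z \<in> X \<times> Y" using AE_of_em1[OF P MTS_D(3)[OF M]] .
  have "(\<integral>z. g n (snd z) \<partial>lam) \<le> (\<integral>z. Sf n (fst z) (snd z) \<partial>lam)"
    by (rule integral_mono_AE[OF ig iS]) (use AE in \<open>eventually_elim, auto intro: g_le\<close>)
  moreover have "(\<integral>z. g n (snd z) \<partial>lam) = integral\<^sup>L \<nu> (g n)"
    unfolding marg[symmetric] by (rule integral_distr[symmetric, OF msnd g_measurable])
  ultimately show ?thesis using e1 by simp
qed

end

lemma divmod_block:
  fixes P i s :: int
  assumes "P > 0" "0 \<le> s" "s < P"
  shows "(P * i + s) div P = i" "(P * i + s) mod P = s"
proof -
  have "(s + P * i) div P = s div P + i" using assms(1) by simp
  moreover have "s div P = 0" using assms by simp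
  ultimately show "(P * i + s) div P = i" by (simp add: add.commute)
  have "(s + P * i) mod P = s mod P" by simp
  moreover have "s mod P = s" using assms by simp
  ultimately show "(P * i + s) mod P = s" by (simp add: add.commute)
qed

context SS begin

definition PP :: "nat \<Rightarrow> nat" where "PP n = n + 2 * L + DX + 1"

lemma PP_pos: "PP n > 0" by (simp add: PP_def)

definition Wn :: "nat \<Rightarrow> int set" where "Wn n = {- int L..int n + int L}"

definition Xsel :: "nat \<Rightarrow> (int \<Rightarrow> 'a) \<Rightarrow> (int \<Rightarrow> 'a)" where
  "Xsel n y = (SOME x. x \<in> X \<and> Sf n x (restrict y (Wn n)) = g n (restrict y (Wn n)))"

lemma Xsel: "Xsel n y \<in> X" "Sf n (Xsel n y) y = g n y"
proof -
  have ex: "\<exists>x. x \<in> X \<and> Sf n x (restrict y (Wn n)) = g n (restrict y (Wn n))"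
    using g_attained by blast
  have *: "Xsel n y \<in> X \<and> Sf n (Xsel n y) (restrict y (Wn n)) = g n (restrict y (Wn n))"
    unfolding Xsel_def by (rule someI_ex[OF ex])
  then show "Xsel n y \<in> X" by blast
  have "Sf n (Xsel n y) (restrict y (Wn n)) = Sf n (Xsel n y) y"
    using Sf_fdet_y[of n "Xsel n y"] unfolding fdet_def Wn_def by auto
  moreover have "g n (restrict y (Wn n)) = g n y"
    using g_fdet[of n] unfolding fdet_def Wn_def by auto
  ultimately show "Sf n (Xsel n y) y = g n y" using * by simp
qed

lemma Xsel_cong: "(\<And>j. j \<in> Wn n \<Longrightarrow> y j = y' j) \<Longrightarrow> Xsel n y = Xsel n y'"
proof -
  assume "\<And>j. j \<in> Wn n \<Longrightarrow> y j = y' j"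
  then have "restrict y (Wn n) = restrict y' (Wn n)" by (auto simp: restrict_def)
  then show ?thesis unfolding Xsel_def by simp
qed

definition Zf :: "nat \<Rightarrow> (int \<Rightarrow> 'a) \<Rightarrow> (int \<Rightarrow> 'a)" where
  "Zf n y = (SOME z. z \<in> X \<and> (\<forall>j \<le> int n + int L. z j = Xsel n y j) \<and>
     (\<forall>j \<ge> int (PP n) - int L. z j = Xsel n (sh (int (PP n)) y) (j - int (PP n))))"

lemma Zf: "Zf n y \<in> X" "\<And>j. j \<le> int n + int L \<Longrightarrow> Zf n y j = Xsel n y j"
  "\<And>j. j \<ge> int (PP n) - int L \<Longrightarrow> Zf n y j = Xsel n (sh (int (PP n)) y) (j - int (PP n))"
proof -
  have "\<exists>z\<in>X. (\<forall>j \<le> int n + int L. z j = Xsel n y j) \<and>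
     (\<forall>j \<ge> int (PP n) - int L. z j = sh (- int (PP n)) (Xsel n (sh (int (PP n)) y)) j)"
    by (rule Xtr[OF Xsel(1) Xsh[OF Xsel(1)]]) (simp add: PP_def)
  then have ex: "\<exists>z. z \<in> X \<and> (\<forall>j \<le> int n + int L. z j = Xsel n y j) \<and>
     (\<forall>j \<ge> int (PP n) - int L. z j = Xsel n (sh (int (PP n)) y) (j - int (PP n)))"
    by auto
  have *: "Zf n y \<in> X \<and> (\<forall>j \<le> int n + int L. Zf n y j = Xsel n y j) \<and>
     (\<forall>j \<ge> int (PP n) - int L. Zf n y j = Xsel n (sh (int (PP n)) y) (j - int (PP n)))"
    unfolding Zf_def by (rule someI_ex[OF ex])
  then show "Zf n y \<in> X" "\<And>j. j \<le> int n + int L \<Longrightarrow> Zf n y j = Xsel n y j"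
    "\<And>j. j \<ge> int (PP n) - int L \<Longrightarrow> Zf n y j = Xsel n (sh (int (PP n)) y) (j - int (PP n))"
    by blast+
qed

lemma Zf_cong:
  assumes "\<And>j. j \<in> {- int L..int (PP n) + int n + int L} \<Longrightarrow> y j = y' j"
  shows "Zf n y = Zf n y'"
proof -
  have "Xsel n y = Xsel n y'" by (rule Xsel_cong) (use assms in \<open>auto simp: Wn_def PP_def\<close>)
  moreover have "Xsel n (sh (int (PP n)) y) = Xsel n (sh (int (PP n)) y')"
    by (rule Xsel_cong) (use assms in \<open>auto simp: Wn_def PP_def\<close>)
  ultimately show ?thesis unfolding Zf_def by simp
qed

definition Phi :: "nat \<Rightarrow> (int \<Rightarrow> 'a) \<Rightarrow> (int \<Rightarrow> 'a)" where
  "Phi n y = (\<lambda>j. Zf n (sh (int (PP n) * (j div int (PP n))) y) (j mod int (PP n)))"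

lemma Phi_block:
  assumes "0 \<le> s" "s < int (PP n)"
  shows "Phi n y (int (PP n) * i + s) = Zf n (sh (int (PP n) * i) y) s"
  using divmod_block[of "int (PP n)" s i] assms PP_pos[of n] unfolding Phi_def by simp

lemma Phi_decomp: obtains i s where "j = int (PP n) * i + s" "0 \<le> s" "s < int (PP n)"
proof -
  have "j = int (PP n) * (j div int (PP n)) + j mod int (PP n)" by simp
  moreover have "0 \<le> j mod int (PP n)" "j mod int (PP n) < int (PP n)" using PP_pos[of n] by simp_all
  ultimately show ?thesis using that by blast
qed

lemma Phi_sh: "Phi n (sh (int (PP n)) y) = sh (int (PP n)) (Phi n y)"
proof
  fix j
  obtain i s where j: "j = int (PP n) * i + s" "0 \<le> s" "s < int (PP n)" by (rule Phi_decomp)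
  have "Phi n (sh (int (PP n)) y) j = Zf n (sh (int (PP n) * i + int (PP n)) y) s"
    unfolding j(1) using Phi_block[OF j(2,3)] by (simp add: add.commute)
  moreover have "sh (int (PP n)) (Phi n y) j = Zf n (sh (int (PP n) * (i + 1)) y) s"
  proof -
    have "j + int (PP n) = int (PP n) * (i + 1) + s" using j(1) by (simp add: algebra_simps)
    then show ?thesis using Phi_block[OF j(2,3), of y "i + 1"] by simp
  qed
  ultimately show "Phi n (sh (int (PP n)) y) j = sh (int (PP n)) (Phi n y) j"
    by (simp add: algebra_simps)
qed

lemma Phi_agree:
  assumes t: "- int L \<le> t" "t \<le> int n + int L"
  shows "Phi n y t = Xsel n y t"
proof (cases "t \<ge> 0")
  case True
  have "t < int (PP n)" using t by (simp add: PP_def)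
  then have "Phi n y (int (PP n) * 0 + t) = Zf n (sh (int (PP n) * 0) y) t"
    using Phi_block[of t n y 0] True by simp
  then show ?thesis using Zf(2)[of t n y] t by simp
next
  case False
  have s: "0 \<le> t + int (PP n)" "t + int (PP n) < int (PP n)" using t False by (auto simp: PP_def)
  have "Phi n y (int (PP n) * (-1) + (t + int (PP n))) = Zf n (sh (int (PP n) * (-1)) y) (t + int (PP n))"
    by (rule Phi_block[OF s])
  moreover have "Zf n (sh (int (PP n) * (-1)) y) (t + int (PP n)) = Xsel n y t"
    using Zf(3)[of n "t + int (PP n)" "sh (int (PP n) * (-1)) y"] t by simp
  ultimately show ?thesis by simp
qed

lemma Phi_in_X: "Phi n y \<in> X"
proof (rule Xloc)
  fix j
  obtain i s where j: "j = int (PP n) * i + s" "0 \<le> s" "s < int (PP n)" by (rule Phi_decomp)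
  define base where "base = int (PP n) * i"
  let ?z = "sh (- base) (Zf n (sh base y))"
  have "?z \<in> X" by (rule Xsh[OF Zf(1)])
  moreover have "\<forall>t\<in>{j..j + int MX}. Phi n y t = ?z t"
  proof
    fix t assume t: "t \<in> {j..j + int MX}"
    show "Phi n y t = ?z t"
    proof (cases "t - base < int (PP n)")
      case True
      have "Phi n y (int (PP n) * i + (t - base)) = Zf n (sh (int (PP n) * i) y) (t - base)"
        by (rule Phi_block) (use True t j in \<open>auto simp: base_def\<close>)
      then show ?thesis by (simp add: base_def)
    next
      case False
      define u where "u = t - base - int (PP n)"
      have u: "0 \<le> u" "u < int MX" using False t j unfolding u_def base_def by auto
      have "Phi n y (int (PP n) * (i + 1) + u) = Zf n (sh (int (PP n) * (i + 1)) y) u"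
        by (rule Phi_block) (use u LMX in \<open>auto simp: PP_def\<close>)
      also have "\<dots> = Xsel n (sh (int (PP n) * (i + 1)) y) u"
        by (rule Zf(2)) (use u LMX in auto)
      finally have e1: "Phi n y t = Xsel n (sh (int (PP n) * (i + 1)) y) u"
        unfolding u_def base_def by (simp add: algebra_simps)
      have "?z t = Zf n (sh base y) (t - base)" by simp
      also have "\<dots> = Xsel n (sh (int (PP n)) (sh base y)) (t - base - int (PP n))"
        by (rule Zf(3)) (use False in auto)
      finally have e2: "?z t = Xsel n (sh (int (PP n) * (i + 1)) y) u"
        unfolding u_def base_def by (simp add: algebra_simps)
      show ?thesis using e1 e2 by simp
    qed
  qed
  ultimately show "\<exists>z\<in>X. \<forall>t\<in>{j..j + int MX}. Phi n y t = z t" by blast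
qed

lemma Phi_coord_fdet: "fdet {int (PP n) * (j div int (PP n)) - int L .. int (PP n) * (j div int (PP n)) + int (PP n) + int n + int L} (\<lambda>y. Phi n y j)"
  unfolding fdet_def Phi_def
proof (intro allI impI)
  fix y y' :: "int \<Rightarrow> 'a"
  let ?b = "int (PP n) * (j div int (PP n))"
  assume H: "\<forall>t\<in>{?b - int L..?b + int (PP n) + int n + int L}. y t = y' t"
  have "Zf n (sh ?b y) = Zf n (sh ?b y')"
    by (rule Zf_cong) (use H in auto)
  then show "Zf n (sh ?b y) (j mod int (PP n)) = Zf n (sh ?b y') (j mod int (PP n))" by simp
qed

lemma Phi_measurable: "Phi n \<in> measurable seq_space seq_space"
proof -
  have "(\<lambda>y. Phi n y) \<in> measurable seq_space seq_space"
    unfolding seq_space_def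
  proof (rule measurable_PiM_single')
    fix j :: int
    show "(\<lambda>y. Phi n y j) \<in> measurable (\<Pi>\<^sub>M j\<in>UNIV. count_space UNIV) (count_space UNIV)"
      using fdet_measurable[OF _ Phi_coord_fdet[of n j], of "count_space UNIV"] by (simp add: seq_space_def)
  qed auto
  then show ?thesis by simp
qed

lemma Phi_cost: "Sf (PP n) (Phi n y) y \<le> g n y + (real (PP n) - n) * cf"
proof -
  have PPn: "PP n = n + (PP n - n)" by (simp add: PP_def)
  have "Sf n (Phi n y) y = Sf n (Xsel n y) y"
    using Sf_fdet_x[of n y] Phi_agree unfolding fdet_def by auto
  then have a: "Sf n (Phi n y) y = g n y" using Xsel(2) by simp
  have b: "Sf (PP n - n) (sh (int n) (Phi n y)) (sh (int n) y) \<le> (PP n - n) * cf"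
    using Sf_bound[of "PP n - n"] by (meson abs_le_D1)
  have "Sf (PP n) (Phi n y) y = Sf n (Phi n y) y + Sf (PP n - n) (sh (int n) (Phi n y)) (sh (int n) y)"
    by (subst PPn, rule Sf_add)
  also have "\<dots> \<le> g n y + (PP n - n) * cf" using a b by simp
  finally show ?thesis by (simp add: PP_def)
qed

end

context SS begin

lemma H_exists:
  assumes nu: "\<nu> \<in> MS Y"
  shows "\<exists>lam\<in>couplings X Y \<nu>. integral\<^sup>L lam ft \<le> (integral\<^sup>L \<nu> (g n) + (real (PP n) - n) * cf) / PP n"
proof -
  define P where "P = PP n"
  have P: "P > 0" using PP_pos unfolding P_def .
  note nP = MS_D(1)[OF nu] and nS = MS_D(2)[OF nu]
  have spn: "space \<nu> = UNIV" using sets_eq_imp_space_eq[OF nS] by simp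
  define Psi where "Psi = (\<lambda>y. (Phi n y, y))"
  have PsiM: "Psi \<in> measurable seq_space (seq_space \<Otimes>\<^sub>M seq_space)"
    unfolding Psi_def by (intro measurable_Pair Phi_measurable measurable_ident_sets refl)
  have PsiM': "Psi \<in> measurable \<nu> (seq_space \<Otimes>\<^sub>M seq_space)"
    using PsiM measurable_cong_sets[OF nS refl] by blast
  define \<nu>' where "\<nu>' = distr \<nu> (seq_space \<Otimes>\<^sub>M seq_space) Psi"
  have n'P: "prob_space \<nu>'" unfolding \<nu>'_def by (rule prob_space.prob_space_distr[OF nP PsiM'])
  have n'S: "sets \<nu>' = sets (seq_space \<Otimes>\<^sub>M seq_space)" unfolding \<nu>'_def by simp
  interpret A: avg_setting "seq_space \<Otimes>\<^sub>M seq_space" FF P \<nu>'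
    by (rule avg_setting.intro[OF FF_measurable n'P n'S P])
  define lam where "lam = avg (seq_space \<Otimes>\<^sub>M seq_space) FF P \<nu>'"
  have m\<nu>': "measure \<nu>' B = measure \<nu> (Psi -` B)" if "B \<in> sets (seq_space \<Otimes>\<^sub>M seq_space)" for B
    unfolding \<nu>'_def using measure_distr[OF PsiM' that] spn by simp
  have PsiB: "Psi -` B \<in> sets seq_space" if "B \<in> sets (seq_space \<Otimes>\<^sub>M seq_space)" for B
    using measurable_sets[OF PsiM that] by simp
  have FFk_sets: "(FF ^^ k) -` B \<in> sets (seq_space \<Otimes>\<^sub>M seq_space)" if "B \<in> sets (seq_space \<Otimes>\<^sub>M seq_space)" for B k
    using measurable_sets[OF A.Fk that] by simp
  have PsiFF: "Psi -` ((FF ^^ P) -` B) = sh (int P) -` (Psi -` B)" for B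
    by (rule set_eqI) (simp add: Psi_def P_def FF_pow_apply Phi_sh)
  have per: "measure \<nu>' ((FF ^^ P) -` B \<inter> space (seq_space \<Otimes>\<^sub>M seq_space)) = measure \<nu>' B"
    if B: "B \<in> sets (seq_space \<Otimes>\<^sub>M seq_space)" for B
  proof -
    have "measure \<nu>' ((FF ^^ P) -` B \<inter> space (seq_space \<Otimes>\<^sub>M seq_space)) = measure \<nu> (Psi -` ((FF ^^ P) -` B))"
      using m\<nu>'[OF FFk_sets[OF B]] by simp
    also have "\<dots> = measure \<nu> (sh (int P) -` (Psi -` B))" using PsiFF by simp
    also have "\<dots> = measure \<nu> (Psi -` B)" by (rule MS_sh_measure[OF nu PsiB[OF B]])
    finally show ?thesis using m\<nu>'[OF B] by simp
  qed
  have lamP: "prob_space lam" unfolding lam_def by (rule A.prob_avg)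
  interpret L: prob_space lam by (rule lamP)
  interpret N: prob_space \<nu> by (rule nP)
  have lamS: "sets lam = sets (seq_space \<Otimes>\<^sub>M seq_space)" unfolding lam_def by simp
  have mlam: "measure lam B = (\<Sum>k<P. measure \<nu> (C k))/P"
    if B: "B \<in> sets (seq_space \<Otimes>\<^sub>M seq_space)" and
       eq: "\<And>k. Psi -` ((FF ^^ k) -` B) = C k" for B C
    using A.measure_avg[OF B] m\<nu>'[OF FFk_sets[OF B]] eq unfolding lam_def by simp
  have nuY: "measure \<nu> Y = 1" using MS_D(3)[OF nu] by (simp add: measure_def)
  have XY1: "emeasure lam (X \<times> Y) = 1"
  proof -
    have "measure lam (X \<times> Y) = (\<Sum>k<P. measure \<nu> (sh (int k) -` Y))/P"
    proof (rule mlam[OF XY_sets])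
      fix k
      show "Psi -` ((FF ^^ k) -` (X \<times> Y)) = sh (int k) -` Y"
        using Xsh[OF Phi_in_X] unfolding Psi_def by (intro set_eqI) (simp add: FF_pow_apply)
    qed
    also have "\<dots> = 1"
    proof -
      have "measure \<nu> (sh (int k) -` Y) = 1" for k
        using MS_sh_measure[OF nu Ysets, of k] nuY by simp
      then show ?thesis using P by simp
    qed
    finally show ?thesis by (simp add: L.emeasure_eq_measure)
  qed
  have inv: "emeasure lam ((\<lambda>(x, y). (shift x, shift y)) -` B \<inter> space (seq_space \<Otimes>\<^sub>M seq_space)) = emeasure lam B"
    if "B \<in> sets (seq_space \<Otimes>\<^sub>M seq_space)" for B
    using A.avg_invariant[OF per that] unfolding lam_def FF_def by simp
  have lamM: "lam \<in> MTS X Y"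
    unfolding MTS_def invariant_measures_def using lamS lamP XY1 inv by blast
  have marg: "distr lam seq_space snd = \<nu>"
  proof (rule measure_eqI)
    show "sets (distr lam seq_space snd) = sets \<nu>" using nS by simp
    fix B assume "B \<in> sets (distr lam seq_space snd)"
    then have B: "B \<in> sets seq_space" by simp
    have e: "snd -` B \<inter> space lam = UNIV \<times> B" using lamS sets_eq_imp_space_eq[OF lamS] by auto
    have UB: "UNIV \<times> B \<in> sets (seq_space \<Otimes>\<^sub>M seq_space)"
      using B by (intro pair_measureI) (auto intro: sets.top[of seq_space, simplified])
    have msnd: "snd \<in> measurable lam seq_space" using measurable_cong_sets[OF lamS refl] measurable_snd by blast
    have "measure lam (UNIV \<times> B) = (\<Sum>k<P. measure \<nu> (sh (int k) -` B))/P"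
      by (rule mlam[OF UB]) (intro set_eqI, simp add: Psi_def FF_pow_apply)
    also have "\<dots> = measure \<nu> B" using MS_sh_measure[OF nu B] P by simp
    finally have "measure lam (UNIV \<times> B) = measure \<nu> B" .
    then show "emeasure (distr lam seq_space snd) B = emeasure \<nu> B"
      using emeasure_distr[OF msnd B] e
      by (simp add: L.emeasure_eq_measure N.emeasure_eq_measure)
  qed
  have mk: "(\<lambda>y. ft ((FF ^^ k) (Psi y))) \<in> borel_measurable \<nu>" for k
    using measurable_comp[OF PsiM' measurable_comp[OF A.Fk ft_measurable]] by (simp add: comp_def)
  have ik: "integrable \<nu> (\<lambda>y. ft ((FF ^^ k) (Psi y)))" for k
    by (rule bnd_int[OF nP mk, where B=cf]) (rule cf)
  have sumSf: "(\<Sum>k<P. ft ((FF ^^ k) (Psi y))) = Sf P (Phi n y) y" for y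
    by (simp add: Sf_def Psi_def FF_pow_apply)
  have "integral\<^sup>L lam ft = (\<Sum>k<P. \<integral>z. ft ((FF ^^ k) z) \<partial>\<nu>') / P"
    unfolding lam_def by (rule A.integral_avg[where B=cf]) (auto intro: cf)
  also have "(\<Sum>k<P. \<integral>z. ft ((FF ^^ k) z) \<partial>\<nu>') = (\<Sum>k<P. \<integral>y. ft ((FF ^^ k) (Psi y)) \<partial>\<nu>)"
    unfolding \<nu>'_def
    by (intro sum.cong refl integral_distr[OF PsiM'] measurable_comp[OF A.Fk ft_measurable, unfolded comp_def])
  also have "\<dots> = (\<integral>y. (\<Sum>k<P. ft ((FF ^^ k) (Psi y))) \<partial>\<nu>)"
    using Bochner_Integration.integral_sum[where I="{..<P}" and M=\<nu> and f="\<lambda>k y. ft ((FF ^^ k) (Psi y))"] ik by simp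
  also have "\<dots> = (\<integral>y. Sf P (Phi n y) y \<partial>\<nu>)" by (simp add: sumSf)
  also have "(\<integral>y. Sf P (Phi n y) y \<partial>\<nu>) \<le> (\<integral>y. g n y + (real P - n) * cf \<partial>\<nu>)"
  proof (rule integral_mono)
    have "integrable \<nu> (\<lambda>y. (\<Sum>k<P. ft ((FF ^^ k) (Psi y))))" using ik by auto
    then show "integrable \<nu> (\<lambda>y. Sf P (Phi n y) y)" by (simp add: sumSf)
    have mg: "g n \<in> borel_measurable \<nu>" using measurable_cong_sets[OF nS refl] g_measurable by blast
    have "integrable \<nu> (g n)" by (rule bnd_int[OF nP mg g_bound])
    then show "integrable \<nu> (\<lambda>y. g n y + (real P - n) * cf)" by auto
    show "Sf P (Phi n y) y \<le> g n y + (real P - real n) * cf" for y using Phi_cost unfolding P_def by simp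
  qed
  also have "(\<integral>y. g n y + (real P - n) * cf \<partial>\<nu>) = integral\<^sup>L \<nu> (g n) + (real P - n) * cf"
  proof -
    have mg: "g n \<in> borel_measurable \<nu>" using measurable_cong_sets[OF nS refl] g_measurable by blast
    have "integrable \<nu> (g n)" by (rule bnd_int[OF nP mg g_bound])
    then show ?thesis by (simp add: N.prob_space)
  qed
  finally have cost: "integral\<^sup>L lam ft \<le> (integral\<^sup>L \<nu> (g n) + (real P - n) * cf) / P"
    using P by (simp add: divide_right_mono)
  show ?thesis
    by (rule bexI[of _ lam]) (use cost lamM marg in \<open>auto simp: couplings_def P_def\<close>)
qed

end

context SS begin

lemma g_ge: "- (real n * cf) \<le> g n y" using g_bound[of n y] by linarith
lemma g_le_bound: "g n y \<le> real n * cf" using g_bound[of n y] by linarith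

lemma int_g_bounds:
  assumes nu: "\<nu> \<in> MS Y"
  shows "integrable \<nu> (g n)" "- (real n * cf) \<le> integral\<^sup>L \<nu> (g n)" "integral\<^sup>L \<nu> (g n) \<le> real n * cf"
proof -
  interpret N: prob_space \<nu> by (rule MS_D(1)[OF nu])
  have mg: "g n \<in> borel_measurable \<nu>" using measurable_cong_sets[OF MS_D(2)[OF nu] refl] g_measurable by blast
  show ig: "integrable \<nu> (g n)" by (rule bnd_int[OF MS_D(1)[OF nu] mg g_bound])
  have "(\<integral>y. - (real n * cf) \<partial>\<nu>) \<le> integral\<^sup>L \<nu> (g n)"
    by (rule integral_mono[OF _ ig g_ge]) simp
  then show "- (real n * cf) \<le> integral\<^sup>L \<nu> (g n)" by (simp add: N.prob_space)
  have "integral\<^sup>L \<nu> (g n) \<le> (\<integral>y. real n * cf \<partial>\<nu>)"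
    by (rule integral_mono[OF ig _ g_le_bound]) simp
  then show "integral\<^sup>L \<nu> (g n) \<le> real n * cf" by (simp add: N.prob_space)
qed

lemma cpl_ne: "\<nu> \<in> MS Y \<Longrightarrow> couplings X Y \<nu> \<noteq> {}"
  using H_exists[of \<nu> 1] by auto

lemma cpl_val_ge:
  assumes "\<nu> \<in> MS Y" "lam \<in> couplings X Y \<nu>"
  shows "- cf \<le> set_lebesgue_integral lam (X \<times> Y) f"
proof -
  have M: "lam \<in> MTS X Y" using assms(2) unfolding couplings_def by auto
  have "integral\<^sup>L \<nu> (g 1) \<le> 1 * integral\<^sup>L lam ft" using E_bound[OF assms(2), of 1] by simp
  then show ?thesis using int_g_bounds(2)[OF assms(1), of 1] MTS_int_ft[OF M] by simp
qed

lemma psi_bdd_below: "\<nu> \<in> MS Y \<Longrightarrow> bdd_below ((\<lambda>lam. set_lebesgue_integral lam (X \<times> Y) f) ` couplings X Y \<nu>)"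
  using cpl_val_ge by (auto intro!: bdd_belowI[of _ "- cf"])

lemma psi_lower:
  assumes nu: "\<nu> \<in> MS Y" and n: "n > 0"
  shows "integral\<^sup>L \<nu> (g n) / n \<le> psi f X Y \<nu>"
  unfolding psi_def
proof (rule cInf_greatest)
  show "(\<lambda>lam. set_lebesgue_integral lam (X \<times> Y) f) ` couplings X Y \<nu> \<noteq> {}" using cpl_ne[OF nu] by auto
  fix v assume "v \<in> (\<lambda>lam. set_lebesgue_integral lam (X \<times> Y) f) ` couplings X Y \<nu>"
  then obtain lam where lam: "lam \<in> couplings X Y \<nu>" "v = set_lebesgue_integral lam (X \<times> Y) f" by auto
  have M: "lam \<in> MTS X Y" using lam(1) unfolding couplings_def by auto
  have "integral\<^sup>L \<nu> (g n) \<le> n * integral\<^sup>L lam ft" by (rule E_bound[OF lam(1) n])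
  then show "integral\<^sup>L \<nu> (g n) / n \<le> v" using n lam(2) MTS_int_ft[OF M]
    by (simp add: divide_le_eq mult.commute)
qed

lemma psi_upper:
  assumes nu: "\<nu> \<in> MS Y"
  shows "psi f X Y \<nu> \<le> (integral\<^sup>L \<nu> (g n) + (real (PP n) - n) * cf) / PP n"
proof -
  obtain lam where lam: "lam \<in> couplings X Y \<nu>" "integral\<^sup>L lam ft \<le> (integral\<^sup>L \<nu> (g n) + (real (PP n) - n) * cf) / PP n"
    using H_exists[OF nu, of n] by blast
  have M: "lam \<in> MTS X Y" using lam(1) unfolding couplings_def by auto
  have "psi f X Y \<nu> \<le> set_lebesgue_integral lam (X \<times> Y) f"
    unfolding psi_def by (rule cInf_lower) (use lam(1) psi_bdd_below[OF nu] in auto)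
  then show ?thesis using lam(2) MTS_int_ft[OF M] by simp
qed

lemma psi_le_cf:
  assumes nu: "\<nu> \<in> MS Y"
  shows "psi f X Y \<nu> \<le> cf"
proof -
  have "psi f X Y \<nu> \<le> (integral\<^sup>L \<nu> (g 1) + (real (PP 1) - 1) * cf) / PP 1" using psi_upper[OF nu, of 1] by simp
  also have "\<dots> \<le> (cf + (real (PP 1) - 1) * cf) / PP 1"
    using int_g_bounds(3)[OF nu, of 1] PP_pos[of 1] by (intro divide_right_mono) auto
  also have "\<dots> = cf" using PP_pos[of 1] by (simp add: algebra_simps)
  finally show ?thesis .
qed

lemma psi_le_alpha:
  assumes nu: "\<nu> \<in> MS Y"
  shows "psi f X Y \<nu> \<le> alpha f X Y"
  unfolding alpha_def by (rule cSup_upper) (use nu psi_le_cf in \<open>auto intro!: bdd_aboveI[of _ cf]\<close>)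

end

context SS begin

lemma Y_periodic:
  assumes y: "y \<in> Y" and ab: "int MY \<le> b - a"
  shows "\<exists>yt\<in>Y. sh (int (nat (b - a) + DY + 1)) yt = yt \<and> (\<forall>j\<in>{a..b}. yt j = y j)"
proof -
  define p where "p = int (nat (b - a) + DY + 1)"
  have pp: "p = b - a + int DY + 1" using ab unfolding p_def by simp
  have p0: "p > 0" using pp ab by simp
  have "\<exists>z\<in>Y. (\<forall>j\<le>b. z j = y j) \<and> (\<forall>j\<ge>a + p. z j = sh (- p) y j)"
    by (rule Ytr[OF y Ysh[OF y]]) (simp add: pp)
  then obtain z where z: "z \<in> Y" "\<And>j. j \<le> b \<Longrightarrow> z j = y j" "\<And>j. j \<ge> a + p \<Longrightarrow> z j = y (j - p)"
    by auto
  define yt where "yt = (\<lambda>j. z (a + (j - a) mod p))"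
  have per: "sh p yt = yt"
  proof
    fix j
    have "(j + p - a) mod p = (j - a) mod p"
      by (metis add.commute add_diff_eq mod_add_self1)
    then show "sh p yt j = yt j" by (simp add: yt_def)
  qed
  have agr: "\<forall>j\<in>{a..b}. yt j = y j"
  proof
    fix j assume j: "j \<in> {a..b}"
    have "(j - a) mod p = j - a" using j pp ab by (intro mod_pos_pos_trivial) auto
    then show "yt j = y j" using j z(2) by (simp add: yt_def)
  qed
  have inY: "yt \<in> Y"
  proof (rule Yloc)
    fix j
    define r where "r = (j - a) mod p"
    have r: "0 \<le> r" "r < p" using p0 unfolding r_def by auto
    have "sh (a + r - j) z \<in> Y" by (rule Ysh[OF z(1)])
    moreover have "\<forall>t\<in>{j..j + int MY}. yt t = sh (a + r - j) z t"
    proof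
      fix t assume t: "t \<in> {j..j + int MY}"
      define d where "d = t - j"
      have d: "0 \<le> d" "d \<le> int MY" using t unfolding d_def by auto
      have tm: "(t - a) mod p = (r + d) mod p"
        unfolding r_def d_def by (metis add.commute diff_add_cancel diff_diff_eq2 mod_add_right_eq)
      have rhs: "sh (a + r - j) z t = z (a + r + d)" by (simp add: d_def algebra_simps)
      show "yt t = sh (a + r - j) z t"
      proof (cases "r + d < p")
        case True
        have "(r + d) mod p = r + d" using True r d by (intro mod_pos_pos_trivial) auto
        then show ?thesis unfolding rhs yt_def tm by (simp add: add.assoc)
      next
        case False
        have "(r + d) mod p = (r + d - p) mod p" by (metis diff_add_cancel mod_add_self2)
        also have "\<dots> = r + d - p" using False r d ab pp by (intro mod_pos_pos_trivial) auto
        finally have e: "(r + d) mod p = r + d - p" .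
        have "z (a + r + d) = y (a + r + d - p)" using z(3)[of "a + r + d"] False by simp
        moreover have "z (a + (r + d - p)) = y (a + (r + d - p))" using z(2) r d ab pp by simp
        ultimately show ?thesis unfolding rhs yt_def tm e by (simp add: algebra_simps)
      qed
    qed
    ultimately show "\<exists>z\<in>Y. \<forall>i\<in>{j..j + int MY}. yt i = z i" by blast
  qed
  show ?thesis using inY per agr unfolding p_def by blast
qed

lemma g_rot:
  assumes "k \<le> P" "sh (int P) yt = yt"
  shows "g P yt - CC \<le> g P (sh (int k) yt)"
proof -
  have "g (P - k + k) (sh (int k) yt) \<ge> g (P - k) (sh (int k) yt) + g k (sh (int (P - k)) (sh (int k) yt))"
    by (rule g_superadd)
  moreover have "sh (int (P - k)) (sh (int k) yt) = yt" using assms by simp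
  moreover have "g (k + (P - k)) yt \<le> g k yt + g (P - k) (sh (int k) yt) + CC" by (rule g_almost)
  ultimately show ?thesis using assms(1) by simp
qed

definition Ka :: real where "Ka = (2 * L + DY + 1) * (\<bar>alpha f X Y\<bar> + cf) + CC"

lemma a_bound:
  assumes y: "y \<in> Y"
  shows "g n y \<le> n * alpha f X Y + Ka"
proof -
  define Pn where "Pn = n + 2 * L + DY + 1"
  have Pn0: "Pn > 0" unfolding Pn_def by simp
  obtain yt where yt: "yt \<in> Y" "sh (int (nat ((int n + int L) - (- int L)) + DY + 1)) yt = yt"
      "\<forall>j\<in>{- int L..int n + int L}. yt j = y j"
    using Y_periodic[OF y, where a="- int L" and b="int n + int L"] LMY by auto
  have ytp: "sh (int Pn) yt = yt" using yt(2) unfolding Pn_def by (simp add: nat_add_distrib add.commute add.left_commute)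
  have gy: "g n yt = g n y" using g_fdet[of n] yt(3) unfolding fdet_def by auto
  define \<mu> where "\<mu> = avg seq_space shift Pn (return seq_space yt)"
  have rP: "prob_space (return seq_space yt)" by (rule prob_space_return) simp
  interpret A: avg_setting seq_space shift Pn "return seq_space yt"
    by (rule avg_setting.intro[OF shift_measurable rP sets_return Pn0])
  have shk: "(shift ^^ k) yt = sh (int k) yt" for k by (simp add: funpow_shift)
  have muMS: "\<mu> \<in> MS Y"
  proof -
    have per: "measure (return seq_space yt) ((shift ^^ Pn) -` B \<inter> space seq_space) = measure (return seq_space yt) B"
      if B: "B \<in> sets seq_space" for B
    proof -
      have "(shift ^^ Pn) -` B \<inter> space seq_space \<in> sets seq_space" using measurable_sets[OF A.Fk B] .
      then show ?thesis using B by (simp add: measure_return shk ytp indicator_def)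
    qed
    have "measure \<mu> Y = (\<Sum>k<Pn. measure (return seq_space yt) ((shift ^^ k) -` Y \<inter> space seq_space)) / Pn"
      unfolding \<mu>_def by (rule A.measure_avg[OF Ysets])
    also have "\<dots> = 1"
    proof -
      have "measure (return seq_space yt) ((shift ^^ k) -` Y \<inter> space seq_space) = 1" for k
      proof -
        have "(shift ^^ k) -` Y \<inter> space seq_space \<in> sets seq_space" using measurable_sets[OF A.Fk Ysets] .
        then show ?thesis using Ysh[OF yt(1)] by (simp add: measure_return shk)
      qed
      then show ?thesis using Pn0 by simp
    qed
    finally have m1: "measure \<mu> Y = 1" .
    interpret M: prob_space \<mu> unfolding \<mu>_def by (rule A.prob_avg)
    have "emeasure \<mu> Y = 1" using m1 by (simp add: M.emeasure_eq_measure)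
    then show ?thesis unfolding MS_def invariant_measures_def \<mu>_def
      using A.prob_avg A.avg_invariant[OF per] by simp
  qed
  have "integral\<^sup>L \<mu> (g Pn) = (\<Sum>k<Pn. \<integral>x. g Pn ((shift ^^ k) x) \<partial>return seq_space yt) / Pn"
    unfolding \<mu>_def by (rule A.integral_avg[where B="Pn * cf"]) (auto intro: g_bound)
  also have "\<dots> = (\<Sum>k<Pn. g Pn (sh (int k) yt)) / Pn"
  proof -
    have "(\<integral>x. g Pn ((shift ^^ k) x) \<partial>return seq_space yt) = g Pn (sh (int k) yt)" for k
    proof -
      have "(\<lambda>x. g Pn ((shift ^^ k) x)) \<in> borel_measurable seq_space"
        using measurable_comp[OF A.Fk g_measurable] by (simp add: comp_def)
      then show ?thesis by (simp add: integral_return shk)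
    qed
    then show ?thesis by simp
  qed
  also have "\<dots> \<ge> (\<Sum>k<Pn. g Pn yt - CC) / Pn"
    using g_rot[OF _ ytp] Pn0 by (intro divide_right_mono sum_mono) auto
  finally have i1: "g Pn yt - CC \<le> integral\<^sup>L \<mu> (g Pn)" using Pn0 by simp
  have "g (n + (Pn - n)) yt \<ge> g n yt + g (Pn - n) (sh (int n) yt)" by (rule g_superadd)
  then have i2: "g n y - (Pn - n) * cf \<le> g Pn yt"
    using g_ge[of "Pn - n" "sh (int n) yt"] gy unfolding Pn_def by (simp add: add.assoc)
  have "integral\<^sup>L \<mu> (g Pn) / Pn \<le> alpha f X Y"
    using psi_lower[OF muMS Pn0] psi_le_alpha[OF muMS] by linarith
  then have "integral\<^sup>L \<mu> (g Pn) \<le> Pn * alpha f X Y" using Pn0 by (simp add: divide_le_eq mult.commute)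
  then have "g n y \<le> Pn * alpha f X Y + (Pn - n) * cf + CC" using i1 i2 by linarith
  also have "\<dots> = n * alpha f X Y + (2 * L + DY + 1) * (alpha f X Y + cf) + CC"
    unfolding Pn_def by (simp add: algebra_simps)
  also have "\<dots> \<le> n * alpha f X Y + Ka"
  proof -
    have "(2 * L + DY + 1) * (alpha f X Y + cf) \<le> (2 * L + DY + 1) * (\<bar>alpha f X Y\<bar> + cf)"
      by (intro mult_left_mono) auto
    then show ?thesis unfolding Ka_def by linarith
  qed
  finally show ?thesis .
qed

end

context SS begin

definition Eb :: real where "Eb = (2 * L + DX + 1) * (\<bar>alpha f X Y\<bar> + cf)"

lemma maxim_lower:
  assumes nu: "\<nu> \<in> MS Y" and mx: "psi f X Y \<nu> = alpha f X Y"
  shows "n * alpha f X Y - Eb \<le> integral\<^sup>L \<nu> (g n)"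
proof -
  have "alpha f X Y \<le> (integral\<^sup>L \<nu> (g n) + (real (PP n) - n) * cf) / PP n"
    using psi_upper[OF nu, of n] mx by simp
  then have "PP n * alpha f X Y \<le> integral\<^sup>L \<nu> (g n) + (real (PP n) - n) * cf"
    using PP_pos[of n] by (simp add: le_divide_eq mult.commute)
  moreover have "(real (PP n) - n) * (alpha f X Y - cf) \<ge> - ((real (PP n) - n) * (\<bar>alpha f X Y\<bar> + cf))"
  proof -
    have "real (PP n) - n \<ge> 0" by (simp add: PP_def)
    moreover have "alpha f X Y - cf \<ge> - (\<bar>alpha f X Y\<bar> + cf)" by linarith
    ultimately show ?thesis by (metis minus_mult_right mult_left_mono)
  qed
  moreover have "real (PP n) - n = 2 * L + DX + 1" by (simp add: PP_def)
  ultimately show ?thesis unfolding Eb_def by (simp add: algebra_simps)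
qed

definition cylm :: "nat \<Rightarrow> (int \<Rightarrow> 'a) \<Rightarrow> (int \<Rightarrow> 'a) set" where
  "cylm m y0 = {z. \<forall>j\<in>{- int L..int m + int L}. z j = y0 j}"

lemma cylm_sets: "cylm m y0 \<in> sets seq_space"
  unfolding cylm_def by (rule sets_seq_space_cyl) simp

lemma g_cylm: "y \<in> cylm m y0 \<Longrightarrow> g m y = g m y0"
  using g_fdet[of m] unfolding fdet_def cylm_def by auto

lemma b_bound:
  assumes nu: "\<nu> \<in> MS Y" and mx: "psi f X Y \<nu> = alpha f X Y"
    and y0: "y0 \<in> Y" and m: "m > 0" and pos: "measure \<nu> (cylm m y0) > 0"
  shows "m * alpha f X Y - Ka - 2 * CC \<le> g m y0"
proof (rule ccontr)
  assume neg: "\<not> (m * alpha f X Y - Ka - 2 * CC \<le> g m y0)"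
  define \<gamma> where "\<gamma> = m * alpha f X Y - g m y0 - Ka - 2 * CC"
  have \<gamma>: "\<gamma> > 0" using neg unfolding \<gamma>_def by simp
  define A where "A = cylm m y0"
  define \<alpha> where "\<alpha> = alpha f X Y"
  define cnt where "cnt N y = (\<Sum>j<N. indicator A (sh (int (j * m)) y) :: real)" for N y
  have claim: "\<forall>y\<in>Y. \<forall>r. g (N * m + r) y \<le> (N * m + r) * \<alpha> + Ka + CC - \<gamma> * cnt N y" for N
  proof (induction N)
    case 0
    show ?case using a_bound CC_nonneg unfolding cnt_def \<alpha>_def by (auto simp: add_increasing2)
  next
    case (Suc N)
    show ?case
    proof (intro ballI allI)
      fix y r assume y: "y \<in> Y"
      have eqn: "Suc N * m + r = N * m + (m + r)" by (simp add: algebra_simps)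
      have cS: "cnt (Suc N) y = cnt N y + indicator A (sh (int (N * m)) y)" unfolding cnt_def by simp
      show "g (Suc N * m + r) y \<le> (Suc N * m + r) * \<alpha> + Ka + CC - \<gamma> * cnt (Suc N) y"
      proof (cases "sh (int (N * m)) y \<in> A")
        case True
        have c: "cnt (Suc N) y = cnt N y + 1" using cS True by simp
        have s1: "g (N * m + (m + r)) y \<le> g (N * m) y + g (m + r) (sh (int (N * m)) y) + CC" by (rule g_almost)
        have s2: "g (m + r) (sh (int (N * m)) y) \<le> g m (sh (int (N * m)) y) + g r (sh (int m) (sh (int (N * m)) y)) + CC"
          by (rule g_almost)
        have s3: "g m (sh (int (N * m)) y) = g m y0" using True g_cylm unfolding A_def by blast
        have s4: "g r (sh (int m) (sh (int (N * m)) y)) \<le> r * \<alpha> + Ka"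
          unfolding \<alpha>_def by (rule a_bound[OF Ysh[OF Ysh[OF y]]])
        have s5: "g (N * m + 0) y \<le> (N * m + 0) * \<alpha> + Ka + CC - \<gamma> * cnt N y" using Suc.IH y by blast
        show ?thesis unfolding eqn c using s1 s2 s3 s4 s5
          by (simp add: \<gamma>_def \<alpha>_def algebra_simps)
      next
        case False
        have c: "cnt (Suc N) y = cnt N y" using cS False by simp
        have "g (N * m + (m + r)) y \<le> (N * m + (m + r)) * \<alpha> + Ka + CC - \<gamma> * cnt N y" using Suc.IH y by blast
        then show ?thesis unfolding eqn c by (simp add: algebra_simps)
      qed
    qed
  qed
  interpret N: prob_space \<nu> by (rule MS_D(1)[OF nu])
  have nS: "sets \<nu> = sets seq_space" by (rule MS_D(2)[OF nu])
  have AEY: "AE y in \<nu>. y \<in> Y" by (rule AE_of_em1[OF MS_D(1,3)[OF nu]])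
  have Asets: "A \<in> sets seq_space" unfolding A_def by (rule cylm_sets)
  have mind: "(\<lambda>y. indicator A (sh (int k) y) :: real) \<in> borel_measurable \<nu>" for k
  proof -
    have "(\<lambda>y. indicator A (sh (int k) y) :: real) \<in> borel_measurable seq_space"
      using measurable_comp[OF sh_measurable borel_measurable_indicator[OF Asets]] by (simp add: comp_def)
    then show ?thesis using measurable_cong_sets[OF nS refl] by blast
  qed
  have iind: "integrable \<nu> (\<lambda>y. indicator A (sh (int k) y) :: real)" for k
    by (rule bnd_int[OF MS_D(1)[OF nu] mind, where B=1]) (simp add: indicator_def)
  have intind: "(\<integral>y. indicator A (sh (int k) y) \<partial>\<nu>) = measure \<nu> A" for k
  proof -
    have "(\<integral>y. indicator A (sh (int k) y) \<partial>\<nu>) = (integral\<^sup>L \<nu> (indicator A) :: real)"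
      by (rule MS_sh_integral[OF nu borel_measurable_indicator[OF Asets]])
    also have "\<dots> = measure \<nu> A" using Asets nS sets.sets_into_space[OF Asets] by (simp add: Int_absorb2)
    finally show ?thesis .
  qed
  have icnt: "integrable \<nu> (cnt N)" for N unfolding cnt_def by (intro Bochner_Integration.integrable_sum iind)
  have intcnt: "integral\<^sup>L \<nu> (cnt N) = N * measure \<nu> A" for N
  proof -
    have "integral\<^sup>L \<nu> (cnt N) = (\<Sum>j<N. \<integral>y. indicator A (sh (int (j * m)) y) \<partial>\<nu>)"
      unfolding cnt_def by (rule Bochner_Integration.integral_sum) (rule iind)
    also have "\<dots> = (\<Sum>j<N. measure \<nu> A)" by (simp only: intind)
    finally show ?thesis by simp
  qed
  have bound: "real N * \<gamma> * measure \<nu> A \<le> Ka + CC + Eb" for N :: nat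
  proof -
    have "integral\<^sup>L \<nu> (g (N * m)) \<le> (\<integral>y. real (N * m) * \<alpha> + Ka + CC - \<gamma> * cnt N y \<partial>\<nu>)"
    proof (rule integral_mono_AE)
      show "integrable \<nu> (g (N * m))" by (rule int_g_bounds(1)[OF nu])
      show "integrable \<nu> (\<lambda>y. real (N * m) * \<alpha> + Ka + CC - \<gamma> * cnt N y)" using icnt by auto
      show "AE y in \<nu>. g (N * m) y \<le> real (N * m) * \<alpha> + Ka + CC - \<gamma> * cnt N y"
      proof -
        have "\<forall>y\<in>Y. g (N * m + 0) y \<le> real (N * m + 0) * \<alpha> + Ka + CC - \<gamma> * cnt N y" using claim[of N] by blast
        then have H: "\<forall>y\<in>Y. g (N * m) y \<le> real (N * m) * \<alpha> + Ka + CC - \<gamma> * cnt N y" by simp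
        from AEY show ?thesis by eventually_elim (use H in blast)
      qed
    qed
    also have "\<dots> = real (N * m) * \<alpha> + Ka + CC - \<gamma> * (real N * measure \<nu> A)"
      using icnt[of N] intcnt[of N] by (simp add: N.prob_space)
    finally have "integral\<^sup>L \<nu> (g (N * m)) \<le> real (N * m) * \<alpha> + Ka + CC - \<gamma> * (real N * measure \<nu> A)" .
    moreover have "real (N * m) * \<alpha> - Eb \<le> integral\<^sup>L \<nu> (g (N * m))"
      using maxim_lower[OF nu mx, of "N * m"] unfolding \<alpha>_def by simp
    ultimately show ?thesis by (simp add: algebra_simps)
  qed
  have "\<gamma> * measure \<nu> A > 0" using \<gamma> pos unfolding A_def by simp
  then obtain N :: nat where "Ka + CC + Eb < N * (\<gamma> * measure \<nu> A)"
    using ex_less_of_nat_mult by blast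
  then show False using bound[of N] by (simp add: algebra_simps)
qed

end

definition cylW :: "int set \<Rightarrow> (int \<Rightarrow> 'a) \<Rightarrow> (int \<Rightarrow> 'a) set" where
  "cylW W y = {z. \<forall>j\<in>W. z j = y j}"

definition cen :: "nat \<Rightarrow> int set" where "cen n = {- int n..int n}"

lemma measure_support_cylW: "measure_support \<nu> = {y. \<forall>n. emeasure \<nu> (cylW (cen n) y) > 0}"
  unfolding measure_support_def cylW_def cen_def ..

lemma cylW_sets: "finite W \<Longrightarrow> cylW W (y :: int \<Rightarrow> 'a::finite) \<in> sets seq_space"
  unfolding cylW_def by (rule sets_seq_space_cyl)

lemma cyl_cover:
  fixes y :: "int \<Rightarrow> 'a::finite"
  assumes S: "sets \<nu> = sets seq_space" and W': "finite W'" and sub: "W \<subseteq> W'"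
    and I: "I = {w \<in> Pi\<^sub>E W' (\<lambda>_. UNIV). \<forall>j\<in>W. w j = y j}"
  shows "finite I" "cylW W y \<subseteq> (\<Union>w\<in>I. cylW W' w)"
proof -
  show "finite I" unfolding I using W' by (auto intro: finite_subset[OF _ finite_PiE[OF W', of "\<lambda>_. UNIV::'a set"]])
  show "cylW W y \<subseteq> (\<Union>w\<in>I. cylW W' w)"
  proof
    fix z assume z: "z \<in> cylW W y"
    have "restrict z W' \<in> I" using z sub unfolding I cylW_def by auto
    moreover have "z \<in> cylW W' (restrict z W')" unfolding cylW_def by auto
    ultimately show "z \<in> (\<Union>w\<in>I. cylW W' w)" by blast
  qed
qed

lemma cyl_split:
  fixes y :: "int \<Rightarrow> 'a::finite"
  assumes S: "sets \<nu> = sets seq_space" and W': "finite W'" and sub: "W \<subseteq> W'"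
    and pos: "emeasure \<nu> (cylW W y) > 0"
  shows "\<exists>z. (\<forall>j\<in>W. z j = y j) \<and> emeasure \<nu> (cylW W' z) > 0"
proof (rule ccontr)
  assume neg: "\<not> ?thesis"
  define I where "I = {w \<in> Pi\<^sub>E W' (\<lambda>_. UNIV). \<forall>j\<in>W. w j = y j}"
  note cc = cyl_cover[OF S W' sub I_def]
  have sI: "(\<lambda>w. cylW W' w) ` I \<subseteq> sets \<nu>" using cylW_sets[OF W'] S by auto
  have z: "emeasure \<nu> (cylW W' w) = 0" if "w \<in> I" for w
    using neg that unfolding I_def by auto
  have "emeasure \<nu> (cylW W y) \<le> emeasure \<nu> (\<Union>w\<in>I. cylW W' w)"
    by (rule emeasure_mono[OF cc(2)]) (use sI cc(1) in auto)
  also have "\<dots> \<le> (\<Sum>w\<in>I. emeasure \<nu> (cylW W' w))" by (rule emeasure_subadditive_finite[OF cc(1) sI])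
  also have "\<dots> = 0" using z by simp
  finally show False using pos by simp
qed

definition kstep :: "(int \<Rightarrow> 'a) measure \<Rightarrow> nat \<Rightarrow> nat \<Rightarrow> (int \<Rightarrow> 'a) \<Rightarrow> (int \<Rightarrow> 'a)" where
  "kstep \<nu> n0 k z = (SOME z'. (\<forall>j\<in>cen (n0 + k). z' j = z j) \<and> emeasure \<nu> (cylW (cen (n0 + Suc k)) z') > 0)"

primrec kseq :: "(int \<Rightarrow> 'a) measure \<Rightarrow> nat \<Rightarrow> (int \<Rightarrow> 'a) \<Rightarrow> nat \<Rightarrow> (int \<Rightarrow> 'a)" where
  "kseq \<nu> n0 y0 0 = y0"
| "kseq \<nu> n0 y0 (Suc k) = kstep \<nu> n0 k (kseq \<nu> n0 y0 k)"

lemma konig: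
  fixes y0 :: "int \<Rightarrow> 'a::finite"
  assumes S: "sets \<nu> = sets seq_space" and pos: "emeasure \<nu> (cylW (cen n0) y0) > 0"
  shows "\<exists>y'\<in>measure_support \<nu>. \<forall>j\<in>cen n0. y' j = y0 j"
proof -
  let ?s = "kseq \<nu> n0 y0"
  have fin: "finite (cen n)" for n unfolding cen_def by simp
  have censub: "cen a \<subseteq> cen b" if "a \<le> b" for a b using that unfolding cen_def by auto
  have P: "emeasure \<nu> (cylW (cen (n0 + k)) (?s k)) > 0 \<and> (\<forall>j\<in>cen (n0 + k). ?s (Suc k) j = ?s k j)" for k
  proof (induction k)
    case 0
    have ex: "\<exists>z. (\<forall>j\<in>cen (n0 + 0). z j = ?s 0 j) \<and> emeasure \<nu> (cylW (cen (n0 + Suc 0)) z) > 0"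
      by (rule cyl_split[OF S fin censub]) (use pos in auto)
    have "(\<forall>j\<in>cen (n0 + 0). ?s (Suc 0) j = ?s 0 j) \<and> emeasure \<nu> (cylW (cen (n0 + Suc 0)) (?s (Suc 0))) > 0"
      unfolding kseq.simps kstep_def by (rule someI_ex[OF ex[unfolded kseq.simps]])
    then show ?case using pos by simp
  next
    case (Suc k)
    have p1: "emeasure \<nu> (cylW (cen (n0 + Suc k)) (?s (Suc k))) > 0"
    proof -
      have ex: "\<exists>z. (\<forall>j\<in>cen (n0 + k). z j = ?s k j) \<and> emeasure \<nu> (cylW (cen (n0 + Suc k)) z) > 0"
        by (rule cyl_split[OF S fin censub]) (use Suc.IH in auto)
      have "(\<forall>j\<in>cen (n0 + k). ?s (Suc k) j = ?s k j) \<and> emeasure \<nu> (cylW (cen (n0 + Suc k)) (?s (Suc k))) > 0"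
        unfolding kseq.simps kstep_def by (rule someI_ex[OF ex])
      then show ?thesis by blast
    qed
    have ex: "\<exists>z. (\<forall>j\<in>cen (n0 + Suc k). z j = ?s (Suc k) j) \<and> emeasure \<nu> (cylW (cen (n0 + Suc (Suc k))) z) > 0"
      by (rule cyl_split[OF S fin censub]) (use p1 in auto)
    have "(\<forall>j\<in>cen (n0 + Suc k). ?s (Suc (Suc k)) j = ?s (Suc k) j) \<and> emeasure \<nu> (cylW (cen (n0 + Suc (Suc k))) (?s (Suc (Suc k)))) > 0"
      unfolding kseq.simps(2)[of _ _ _ "Suc k"] kstep_def by (rule someI_ex[OF ex])
    then show ?case using p1 by blast
  qed
  have agr: "\<forall>j\<in>cen (n0 + k). ?s k' j = ?s k j" if "k \<le> k'" for k k'
    using that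
  proof (induction k' rule: dec_induct)
    case base then show ?case by simp
  next
    case (step k')
    have "cen (n0 + k) \<subseteq> cen (n0 + k')" using step.hyps(1) censub by simp
    then show ?case using step.IH P[of k'] by auto
  qed
  define y' where "y' j = ?s (nat \<bar>j\<bar>) j" for j
  have y'a: "\<forall>j\<in>cen (n0 + k). y' j = ?s k j" for k
  proof
    fix j assume j: "j \<in> cen (n0 + k)"
    define k2 where "k2 = max k (nat \<bar>j\<bar>)"
    have j2: "j \<in> cen (n0 + nat \<bar>j\<bar>)" unfolding cen_def by auto
    have "?s k2 j = ?s (nat \<bar>j\<bar>) j" using agr[of "nat \<bar>j\<bar>" k2] j2 unfolding k2_def by auto
    moreover have "?s k2 j = ?s k j" using agr[of k k2] j unfolding k2_def by auto
    ultimately show "y' j = ?s k j" unfolding y'_def by simp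
  qed
  have "y' \<in> measure_support \<nu>"
    unfolding measure_support_cylW
  proof (intro CollectI allI)
    fix n
    have "cylW (cen (n0 + n)) (?s n) = cylW (cen (n0 + n)) y'" using y'a[of n] unfolding cylW_def by auto
    moreover have "cylW (cen (n0 + n)) y' \<subseteq> cylW (cen n) y'" using censub[of n "n0 + n"] unfolding cylW_def by auto
    ultimately have "emeasure \<nu> (cylW (cen (n0 + n)) (?s n)) \<le> emeasure \<nu> (cylW (cen n) y')"
      using cylW_sets[OF fin] S by (intro emeasure_mono) auto
    then show "emeasure \<nu> (cylW (cen n) y') > 0" using P[of n] by (meson order_less_le_trans)
  qed
  moreover have "\<forall>j\<in>cen n0. y' j = y0 j" using y'a[of 0] by simp
  ultimately show ?thesis by blast
qed

lemma AE_cyl_pos: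
  fixes \<nu> :: "(int \<Rightarrow> 'a::finite) measure"
  assumes S: "sets \<nu> = sets seq_space" and W: "finite W"
  shows "AE y in \<nu>. emeasure \<nu> (cylW W y) > 0"
proof (rule AE_I')
  define I where "I = {w \<in> Pi\<^sub>E W (\<lambda>_. UNIV). emeasure \<nu> (cylW W w) = 0}"
  have fI: "finite I" unfolding I_def using W by (auto intro: finite_subset[OF _ finite_PiE[OF W, of "\<lambda>_. UNIV::'a set"]])
  have sI: "(\<lambda>w. cylW W w) ` I \<subseteq> sets \<nu>" using cylW_sets[OF W] S by auto
  have U: "(\<Union>w\<in>I. cylW W w) \<in> sets \<nu>" using sI fI by auto
  have "emeasure \<nu> (\<Union>w\<in>I. cylW W w) \<le> (\<Sum>w\<in>I. emeasure \<nu> (cylW W w))"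
    by (rule emeasure_subadditive_finite[OF fI sI])
  also have "\<dots> = 0" unfolding I_def by simp
  finally show "(\<Union>w\<in>I. cylW W w) \<in> null_sets \<nu>" using U by (auto simp: null_sets_def)
  show "{y \<in> space \<nu>. \<not> emeasure \<nu> (cylW W y) > 0} \<subseteq> (\<Union>w\<in>I. cylW W w)"
  proof
    fix y assume y: "y \<in> {y \<in> space \<nu>. \<not> emeasure \<nu> (cylW W y) > 0}"
    have e: "cylW W (restrict y W) = cylW W y" unfolding cylW_def by auto
    have "restrict y W \<in> I" using y e unfolding I_def by (auto simp: not_gr_zero)
    moreover have "y \<in> cylW W (restrict y W)" unfolding cylW_def by auto
    ultimately show "y \<in> (\<Union>w\<in>I. cylW W w)" by blast
  qed
qed


context SS begin

lemma final:
  assumes nu0: "\<nu>0 \<in> MS Y" and nu1: "\<nu>1 \<in> MS Y" and mx: "psi f X Y \<nu>0 = alpha f X Y"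
    and supp: "measure_support \<nu>1 \<subseteq> measure_support \<nu>0"
  shows "psi f X Y \<nu>1 = alpha f X Y"
proof -
  define K2 where "K2 = Ka + 2 * CC"
  have K2: "K2 \<ge> 0" unfolding K2_def Ka_def using CC_nonneg cf(1) by simp
  interpret N1: prob_space \<nu>1 by (rule MS_D(1)[OF nu1])
  interpret N0: prob_space \<nu>0 by (rule MS_D(1)[OF nu0])
  have S1: "sets \<nu>1 = sets seq_space" by (rule MS_D(2)[OF nu1])
  have S0: "sets \<nu>0 = sets seq_space" by (rule MS_D(2)[OF nu0])
  have lowm: "alpha f X Y - K2 / m \<le> psi f X Y \<nu>1" if m: "m > 0" for m :: nat
  proof -
    define R where "R = m + L"
    have AE1: "AE y in \<nu>1. emeasure \<nu>1 (cylW (cen R) y) > 0"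
      by (rule AE_cyl_pos[OF S1]) (simp add: cen_def)
    have AEY: "AE y in \<nu>1. y \<in> Y" by (rule AE_of_em1[OF MS_D(1,3)[OF nu1]])
    have pt: "m * alpha f X Y - K2 \<le> g m y" if y: "y \<in> Y" "emeasure \<nu>1 (cylW (cen R) y) > 0" for y
    proof -
      obtain y' where y': "y' \<in> measure_support \<nu>1" "\<forall>j\<in>cen R. y' j = y j"
        using konig[OF S1 y(2)] by blast
      have "y' \<in> measure_support \<nu>0" using y'(1) supp by blast
      then have p0: "emeasure \<nu>0 (cylW (cen R) y') > 0" unfolding measure_support_cylW by blast
      have "cylW (cen R) y' \<subseteq> cylm m y" using y'(2) unfolding cylW_def cylm_def cen_def R_def by auto
      then have "emeasure \<nu>0 (cylW (cen R) y') \<le> emeasure \<nu>0 (cylm m y)"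
        using cylm_sets S0 by (intro emeasure_mono) auto
      then have "emeasure \<nu>0 (cylm m y) > 0" using p0 by (meson order_less_le_trans)
      then have "measure \<nu>0 (cylm m y) > 0" by (simp add: N0.emeasure_eq_measure)
      then show ?thesis using b_bound[OF nu0 mx y(1) m] unfolding K2_def by simp
    qed
    have "(\<integral>y. m * alpha f X Y - K2 \<partial>\<nu>1) \<le> integral\<^sup>L \<nu>1 (g m)"
    proof (rule integral_mono_AE)
      show "integrable \<nu>1 (\<lambda>y. m * alpha f X Y - K2)" by simp
      show "integrable \<nu>1 (g m)" by (rule int_g_bounds(1)[OF nu1])
      from AE1 AEY show "AE y in \<nu>1. m * alpha f X Y - K2 \<le> g m y" by eventually_elim (use pt in blast)
    qed
    then have "m * alpha f X Y - K2 \<le> integral\<^sup>L \<nu>1 (g m)" by (simp add: N1.prob_space)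
    then have "(m * alpha f X Y - K2) / m \<le> integral\<^sup>L \<nu>1 (g m) / m"
      by (rule divide_right_mono) simp
    moreover have "(m * alpha f X Y - K2) / m = alpha f X Y - K2 / m"
      using m by (simp add: diff_divide_distrib)
    ultimately have "alpha f X Y - K2 / m \<le> integral\<^sup>L \<nu>1 (g m) / m" by simp
    also have "\<dots> \<le> psi f X Y \<nu>1" by (rule psi_lower[OF nu1 m])
    finally show ?thesis .
  qed
  have ge: "alpha f X Y \<le> psi f X Y \<nu>1"
  proof (rule ccontr)
    assume "\<not> alpha f X Y \<le> psi f X Y \<nu>1"
    then have eps: "alpha f X Y - psi f X Y \<nu>1 > 0" by simp
    then obtain m :: nat where m: "K2 < m * (alpha f X Y - psi f X Y \<nu>1)" using ex_less_of_nat_mult by blast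
    have m0: "m > 0" using m K2 by (cases m) auto
    have "K2 / m < alpha f X Y - psi f X Y \<nu>1" using m m0 by (simp add: divide_less_eq mult.commute)
    then show False using lowm[OF m0] by simp
  qed
  show ?thesis using ge psi_le_alpha[OF nu1] by simp
qed

end

theorem corollary3p13:
  fixes X Y :: "(int \<Rightarrow> 'a::finite) set"
    and f :: "(int \<Rightarrow> 'a) \<times> (int \<Rightarrow> 'a) \<Rightarrow> real"
    and \<nu>0 \<nu>1 :: "(int \<Rightarrow> 'a) measure"
  assumes "is_sft X" and "transitive_shift X"
    and "is_sft Y" and "transitive_shift Y"
    and "locally_constant_on f X Y"
    and "\<nu>0 \<in> MS Y" and "\<nu>1 \<in> MS Y"
    and "alpha_maximizing f X Y \<nu>0"
    and "measure_support \<nu>1 \<subseteq> measure_support \<nu>0"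
  shows "alpha_maximizing f X Y \<nu>1"
proof -
  note sx = sft_props[OF assms(1)] and sy = sft_props[OF assms(3)]
  obtain MX where MX: "\<forall>x. (\<forall>j. \<exists>z\<in>X. \<forall>i\<in>{j..j+int MX}. x i = z i) \<longrightarrow> x \<in> X" using sx(4) by blast
  obtain MY where MY: "\<forall>x. (\<forall>j. \<exists>z\<in>Y. \<forall>i\<in>{j..j+int MY}. x i = z i) \<longrightarrow> x \<in> Y" using sy(4) by blast
  obtain DX where DX: "\<forall>x1\<in>X. \<forall>x2\<in>X. \<forall>b1 a2::int. a2 - b1 \<ge> int DX \<longrightarrow>
     (\<exists>x'\<in>X. (\<forall>j\<le>b1. x' j = x1 j) \<and> (\<forall>j\<ge>a2. x' j = x2 j))"
    using assms(2) unfolding transitive_shift_def by blast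
  obtain DY where DY: "\<forall>x1\<in>Y. \<forall>x2\<in>Y. \<forall>b1 a2::int. a2 - b1 \<ge> int DY \<longrightarrow>
     (\<exists>x'\<in>Y. (\<forall>j\<le>b1. x' j = x1 j) \<and> (\<forall>j\<ge>a2. x' j = x2 j))"
    using assms(4) unfolding transitive_shift_def by blast
  obtain L0 :: nat where L0: "\<forall>x y x' y'. x \<in> X \<longrightarrow> y \<in> Y \<longrightarrow> x' \<in> X \<longrightarrow> y' \<in> Y \<longrightarrow>
     (\<forall>j\<in>{- int L0..int L0}. x j = x' j \<and> y j = y' j) \<longrightarrow> f (x, y) = f (x', y')"
    using assms(5) unfolding locally_constant_on_def by blast
  define L where "L = L0 + MX + MY"
  interpret SS X Y f MX MY DX DY L
  proof
    show "X \<noteq> {}" "Y \<noteq> {}" "X \<in> sets seq_space" "Y \<in> sets seq_space" using sx sy by auto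
    show "\<And>x i. x \<in> X \<Longrightarrow> sh i x \<in> X" "\<And>x i. x \<in> Y \<Longrightarrow> sh i x \<in> Y" using sx sy by auto
    show "\<And>x. (\<And>j. \<exists>z\<in>X. \<forall>i\<in>{j..j+int MX}. x i = z i) \<Longrightarrow> x \<in> X" using MX by blast
    show "\<And>x. (\<And>j. \<exists>z\<in>Y. \<forall>i\<in>{j..j+int MY}. x i = z i) \<Longrightarrow> x \<in> Y" using MY by blast
    show "\<And>x1 x2 b1 a2. x1 \<in> X \<Longrightarrow> x2 \<in> X \<Longrightarrow> a2 - b1 \<ge> int DX \<Longrightarrow>
        \<exists>x'\<in>X. (\<forall>j\<le>b1. x' j = x1 j) \<and> (\<forall>j\<ge>a2. x' j = x2 j)" using DX by blast
    show "\<And>x1 x2 b1 a2. x1 \<in> Y \<Longrightarrow> x2 \<in> Y \<Longrightarrow> a2 - b1 \<ge> int DY \<Longrightarrow>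
        \<exists>x'\<in>Y. (\<forall>j\<le>b1. x' j = x1 j) \<and> (\<forall>j\<ge>a2. x' j = x2 j)" using DY by blast
    show "MX \<le> L" "MY \<le> L" unfolding L_def by auto
    show "\<And>x y x' y'. x \<in> X \<Longrightarrow> y \<in> Y \<Longrightarrow> x' \<in> X \<Longrightarrow> y' \<in> Y \<Longrightarrow>
        (\<forall>j\<in>{- int L..int L}. x j = x' j \<and> y j = y' j) \<Longrightarrow> f (x, y) = f (x', y')"
    proof -
      fix x y x' y' assume H: "x \<in> X" "y \<in> Y" "x' \<in> X" "y' \<in> Y" "\<forall>j\<in>{- int L..int L}. x j = x' j \<and> y j = y' j"
      have "\<forall>j\<in>{- int L0..int L0}. x j = x' j \<and> y j = y' j" using H(5) unfolding L_def by auto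
      then show "f (x, y) = f (x', y')" using L0 H(1-4) by blast
    qed
  qed
  show ?thesis using final assms(6,7,8,9) unfolding alpha_maximizing_def by blast
qed


end
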